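(* Let $\mathbb{A}$ be a Boolean algebra and $(\mathbb{B},\mu)$ a metric Boolean algebra. Define $F_\mu\colon\mathcal{H}(\mathbb{A},\mathbb{B})\to P(St(\mathbb{A}))$ by $F_\mu(\varphi)=\widehat{\mu}\circ f_\varphi^{-1}$. Then $F_\mu$ is continuous in each of the following cases: (1) $\mathcal{H}(\mathbb{A},\mathbb{B})$ carries the uniform topology and $P(St(\mathbb{A}))$ the norm topology; (2) $\mathcal{H}(\mathbb{A},\mathbb{B})$ carries the pointwise metric topology and $P(St(\mathbb{A}))$ the weak* topology.
   Context: A metric Boolean algebra $(\mathbb{B},\mu)$ is a Boolean algebra with a strictly positive finitely additive probability measure $\mu$; $d_\mu(A,B)=\mu(A\triangle B)$ is a metric on $\mathbb{B}$. $\mathcal{H}(\mathbb{A},\mathbb{B})$ is the set of Boolean homomorphisms $\mathbb{A}\to\mathbb{B}$. The pointwise metric topology on it has subbase $\{\psi\colon d_\mu(\varphi(A),\psi(A))<\varepsilon\}$ ($\varphi\in\mathcal{H}(\mathbb{A},\mathbb{B})$, $A\in\mathbb{A}$, $\varepsilon>0$); the uniform topology is induced by $d_{hom}(\varphi,\psi)=\sup_{A\in\mathbb{A}}d_\mu(\varphi(A),\psi(A))$. $St(\cdot)$ is the Stone space; algebras are identified with the clopen algebras of their Stone spaces; $\widehat{\mu}$ is the unique Radon measure on $St(\mathbb{B})$ extending $\mu$; $f_\varphi\colon St(\mathbb{B})\to St(\mathbb{A})$, $f_\varphi(x)=\varphi^{-1}[x]$. $P(K)$ is the space of Radon probability measures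 on a compact space $K$; the norm topology is induced by the variation metric $d_{var}(\mu,\nu)=\sup\{|\mu(A)-\nu(A)|+|\mu(B)-\nu(B)|\colon A,B\text{ disjoint Borel}\}$; the weak* topology is the one induced by $C(K)$ (i.e. $\nu\mapsto\int f\,d\nu$ continuous for all $f\in C(K)$). *)

theory Defs
  imports "HOL-Analysis.Analysis" "HOL-Probability.Probability"
begin

definition bool_hom :: "('a::boolean_algebra \<Rightarrow> 'b::boolean_algebra) \<Rightarrow> bool" where
  "bool_hom \<phi> \<longleftrightarrow>
     (\<forall>x y. \<phi> (inf x y) = inf (\<phi> x) (\<phi> y)) \<and>
     (\<forall>x y. \<phi> (sup x y) = sup (\<phi> x) (\<phi> y)) \<and>
     (\<forall>x. \<phi> (- x) = - \<phi> x) \<and> \<phi> bot = bot \<and> \<phi> top = top"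

definition homs :: "('a::boolean_algebra \<Rightarrow> 'b::boolean_algebra) set" where
  "homs = {\<phi>. bool_hom \<phi>}"

definition metric_ba :: "('b::boolean_algebra \<Rightarrow> real) \<Rightarrow> bool" where
  "metric_ba \<mu> \<longleftrightarrow>
     (\<forall>x. 0 \<le> \<mu> x) \<and> \<mu> top = 1 \<and>
     (\<forall>x y. inf x y = bot \<longrightarrow> \<mu> (sup x y) = \<mu> x + \<mu> y) \<and>
     (\<forall>x. x \<noteq> bot \<longrightarrow> 0 < \<mu> x)"

definition sdiff_ba :: "'b::boolean_algebra \<Rightarrow> 'b \<Rightarrow> 'b" where
  "sdiff_ba x y = sup (x - y) (y - x)"

definition d_mu :: "('b::boolean_algebra \<Rightarrow> real) \<Rightarrow> 'b \<Rightarrow> 'b \<Rightarrow> real" where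
  "d_mu \<mu> x y = \<mu> (sdiff_ba x y)"

definition d_hom :: "('b::boolean_algebra \<Rightarrow> real) \<Rightarrow> ('a::boolean_algebra \<Rightarrow> 'b) \<Rightarrow> ('a \<Rightarrow> 'b) \<Rightarrow> real" where
  "d_hom \<mu> \<phi> \<psi> = (SUP a. d_mu \<mu> (\<phi> a) (\<psi> a))"

definition pointwise_top :: "('b::boolean_algebra \<Rightarrow> real) \<Rightarrow> ('a::boolean_algebra \<Rightarrow> 'b) topology" where
  "pointwise_top \<mu> = topology_generated_by
     {{\<psi> \<in> homs. d_mu \<mu> (\<phi> a) (\<psi> a) < \<epsilon>} | \<phi> a \<epsilon>. \<phi> \<in> homs \<and> \<epsilon> > 0}"

definition uniform_top :: "('b::boolean_algebra \<Rightarrow> real) \<Rightarrow> ('a::boolean_algebra \<Rightarrow> 'b) topology" where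
  "uniform_top \<mu> = topology_generated_by
     {{\<psi> \<in> homs. d_hom \<mu> \<phi> \<psi> < r} | \<phi> r. \<phi> \<in> homs \<and> r > 0}"

text \<open>Points of the Stone space are ultrafilters, represented as sets of elements.\<close>
definition ultrafilter_ba :: "'a::boolean_algebra set \<Rightarrow> bool" where
  "ultrafilter_ba U \<longleftrightarrow>
     bot \<notin> U \<and> top \<in> U \<and>
     (\<forall>x y. x \<in> U \<longrightarrow> x \<le> y \<longrightarrow> y \<in> U) \<and>
     (\<forall>x y. x \<in> U \<longrightarrow> y \<in> U \<longrightarrow> inf x y \<in> U) \<and>
     (\<forall>x. x \<in> U \<or> - x \<in> U)"

definition St :: "'a::boolean_algebra set set" where
  "St = {U. ultrafilter_ba U}"

definition stone_set :: "'a::boolean_algebra \<Rightarrow> 'a set set" where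
  "stone_set a = {U \<in> St. a \<in> U}"

definition stone_top :: "'a::boolean_algebra set topology" where
  "stone_top = topology_generated_by (range stone_set)"

definition f_hom :: "('a::boolean_algebra \<Rightarrow> 'b::boolean_algebra) \<Rightarrow> 'b set \<Rightarrow> 'a set" where
  "f_hom \<phi> x = \<phi> -` x"

definition borel_of :: "'x topology \<Rightarrow> 'x measure" where
  "borel_of K = sigma (topspace K) {U. openin K U}"

definition radon_probs :: "'x topology \<Rightarrow> 'x measure set" where
  "radon_probs K = {\<nu>. sets \<nu> = sets (borel_of K) \<and> space \<nu> = topspace K \<and> prob_space \<nu> \<and>
      (\<forall>E \<in> sets \<nu>. measure \<nu> E = (SUP C \<in> {C. compactin K C \<and> C \<subseteq> E}. measure \<nu> C))}"

definition d_var :: "'x measure \<Rightarrow> 'x measure \<Rightarrow> real" where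
  "d_var \<mu> \<nu> = Sup {\<bar>measure \<mu> A - measure \<nu> A\<bar> + \<bar>measure \<mu> B - measure \<nu> B\<bar> | A B.
        A \<in> sets \<mu> \<and> B \<in> sets \<mu> \<and> A \<inter> B = {}}"

definition norm_top :: "'x topology \<Rightarrow> 'x measure topology" where
  "norm_top K = topology_generated_by
     {{\<nu> \<in> radon_probs K. d_var \<nu>0 \<nu> < r} | \<nu>0 r. \<nu>0 \<in> radon_probs K \<and> r > 0}"

definition weak_star_top :: "'x topology \<Rightarrow> 'x measure topology" where
  "weak_star_top K = topology_generated_by
     {{\<nu> \<in> radon_probs K. \<bar>(\<integral>x. f x \<partial>\<nu>) - c\<bar> < \<epsilon>} | f c \<epsilon>.
        continuous_map K euclideanreal f \<and> \<epsilon> > 0}"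

definition mu_hat :: "('b::boolean_algebra \<Rightarrow> real) \<Rightarrow> 'b set measure" where
  "mu_hat \<mu> = (THE \<nu>. \<nu> \<in> radon_probs stone_top \<and> (\<forall>b. measure \<nu> (stone_set b) = \<mu> b))"

definition F_mu :: "('b::boolean_algebra \<Rightarrow> real) \<Rightarrow> ('a::boolean_algebra \<Rightarrow> 'b) \<Rightarrow> 'a set measure" where
  "F_mu \<mu> \<phi> = distr (mu_hat \<mu>) (borel_of stone_top) (f_hom \<phi>)"

end

theory Submission
  imports Defs "HOL-Analysis.Analysis" "HOL-Probability.Probability"
begin
section \<open>Measure on the Boolean algebra\<close>

context
  fixes \<mu> :: "'b::boolean_algebra \<Rightarrow> real"
  assumes M: "metric_ba \<mu>"
begin

lemma mu_nonneg: "0 \<le> \<mu> x"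
  using M by (simp add: metric_ba_def)

lemma mu_top: "\<mu> top = 1"
  using M by (simp add: metric_ba_def)

lemma mu_add: "inf x y = bot \<Longrightarrow> \<mu> (sup x y) = \<mu> x + \<mu> y"
  using M by (simp add: metric_ba_def)

lemma mu_pos: "x \<noteq> bot \<Longrightarrow> 0 < \<mu> x"
  using M by (simp add: metric_ba_def)

lemma mu_bot: "\<mu> bot = 0"
  using mu_add[of bot bot] by simp

lemma mu_split: "\<mu> x = \<mu> (inf x y) + \<mu> (x - y)"
proof -
  have "sup (inf x y) (x - y) = x"
    by (simp add: diff_eq flip: inf_sup_distrib1)
  moreover have "inf (inf x y) (x - y) = bot"
    by (simp add: diff_eq inf_assoc inf_left_commute[of y])
  ultimately show ?thesis using mu_add[of "inf x y" "x - y"] by simp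
qed

lemma mu_mono: "x \<le> y \<Longrightarrow> \<mu> x \<le> \<mu> y"
  using mu_split[of y x] mu_nonneg[of "y - x"] by (simp add: inf_absorb2)

lemma mu_le1: "\<mu> x \<le> 1"
  using mu_mono[of x top] mu_top by simp

lemma mu_sub: "\<mu> (sup x y) \<le> \<mu> x + \<mu> y"
proof -
  have "sup x y = sup x (y - x)"
    by (simp add: diff_eq sup_inf_distrib1)
  moreover have "inf x (y - x) = bot"
    by (simp add: diff_eq inf_left_commute[of x])
  ultimately have "\<mu> (sup x y) = \<mu> x + \<mu> (y - x)" using mu_add by simp
  moreover have "\<mu> (y - x) \<le> \<mu> y" by (rule mu_mono) (simp add: diff_eq)
  ultimately show ?thesis by simp
qed

lemma d_mu_eq: "d_mu \<mu> x y = \<mu> (x - y) + \<mu> (y - x)"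
proof -
  have "inf (x - y) (y - x) = bot"
    by (simp add: diff_eq inf_assoc inf_left_commute[of "-y"] inf_left_commute[of x])
  then show ?thesis by (simp add: d_mu_def sdiff_ba_def mu_add)
qed

lemma mu_dist: "\<bar>\<mu> x - \<mu> y\<bar> \<le> d_mu \<mu> x y"
  using mu_split[of x y] mu_split[of y x] d_mu_eq[of x y] mu_nonneg[of "x - y"] mu_nonneg[of "y - x"]
  by (simp add: inf_commute)

lemma d_mu_nonneg: "0 \<le> d_mu \<mu> x y"
  by (simp add: d_mu_def mu_nonneg)

lemma d_mu_le1: "d_mu \<mu> x y \<le> 1"
  by (simp add: d_mu_def mu_le1)

lemma d_mu_refl: "d_mu \<mu> x x = 0"
  by (simp add: d_mu_def sdiff_ba_def diff_eq mu_bot)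

lemma bot_ne_top: "(bot::'b) \<noteq> top"
  using mu_bot mu_top by auto

end

section \<open>Ultrafilters\<close>

definition fip :: "'a::boolean_algebra set \<Rightarrow> bool" where
  "fip F \<longleftrightarrow> (\<forall>xs. set xs \<subseteq> F \<longrightarrow> foldr inf xs top \<noteq> bot)"

lemma foldr_inf_append: "foldr inf (xs @ ys) top = inf (foldr inf xs top) (foldr inf ys top)"
  for xs :: "'a::boolean_algebra list"
  by (induct xs) (simp_all add: inf_assoc)

lemma foldr_inf_filter: "inf x (foldr inf (filter (\<lambda>y. y \<noteq> x) ys) top) \<le> foldr inf ys top"
  for x :: "'a::boolean_algebra"
proof (induct ys)
  case Nil then show ?case by simp
next
  case (Cons y ys)
  show ?case
  proof (cases "y = x")
    case True
    then show ?thesis using Cons by (simp add: le_infI1 le_infI2)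
  next
    case False
    then have "inf x (foldr inf (filter (\<lambda>y. y \<noteq> x) (y # ys)) top)
        = inf y (inf x (foldr inf (filter (\<lambda>y. y \<noteq> x) ys) top))"
      by (simp add: inf_left_commute)
    also have "\<dots> \<le> inf y (foldr inf ys top)" using Cons by (meson inf_mono order_refl)
    finally show ?thesis by simp
  qed
qed

lemma fip_insert:
  fixes x :: "'a::boolean_algebra"
  assumes "\<forall>xs. set xs \<subseteq> M \<longrightarrow> inf x (foldr inf xs top) \<noteq> bot"
  shows "fip (insert x M)"
  unfolding fip_def
proof (intro allI impI)
  fix ys assume "set ys \<subseteq> insert x M"
  then have "set (filter (\<lambda>y. y \<noteq> x) ys) \<subseteq> M" by auto
  then have "inf x (foldr inf (filter (\<lambda>y. y \<noteq> x) ys) top) \<noteq> bot" using assms by blast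
  with foldr_inf_filter[of x ys] show "foldr inf ys top \<noteq> bot"
    by (metis bot_unique)
qed

lemma ultrafilter_exists:
  fixes F :: "'a::boolean_algebra set"
  assumes "fip F"
  shows "\<exists>U. ultrafilter_ba U \<and> F \<subseteq> U"
proof -
  define A where "A = {G. F \<subseteq> G \<and> fip G}"
  have "\<forall>C\<in>chains A. \<exists>U\<in>A. \<forall>X\<in>C. X \<subseteq> U"
  proof
    fix C assume C: "C \<in> chains A"
    show "\<exists>U\<in>A. \<forall>X\<in>C. X \<subseteq> U"
    proof (cases "C = {}")
      case True then show ?thesis using assms by (auto simp: A_def)
    next
      case False
      have "\<Union>C \<in> A"
        unfolding A_def
      proof (intro CollectI conjI)
        show "F \<subseteq> \<Union>C" using False C by (auto simp: chains_def A_def)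
        show "fip (\<Union>C)"
          unfolding fip_def
        proof (intro allI impI)
          fix xs assume xs: "set xs \<subseteq> \<Union>C"
          have "subset.chain A C" using C unfolding chains_def chain_subset_def subset.chain_def by blast
          then obtain B where "B \<in> C" "set xs \<subseteq> B"
            using finite_subset_Union_chain[of "set xs" C A] xs False by auto
          then show "foldr inf xs top \<noteq> bot" using C by (auto simp: chains_def A_def fip_def)
        qed
      qed
      then show ?thesis by blast
    qed
  qed
  then obtain M where MA: "M \<in> A" and max: "\<forall>X\<in>A. M \<subseteq> X \<longrightarrow> X = M"
    using Zorn_Lemma2[of A] by blast
  have fipM: "fip M" and FM: "F \<subseteq> M" using MA by (auto simp: A_def)
  have ins: "x \<in> M" if "\<forall>xs. set xs \<subseteq> M \<longrightarrow> inf x (foldr inf xs top) \<noteq> bot" for x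
  proof -
    have "insert x M \<in> A" using fip_insert[OF that] FM by (auto simp: A_def)
    then show ?thesis using max by blast
  qed
  have "ultrafilter_ba M"
    unfolding ultrafilter_ba_def
  proof (intro conjI allI impI)
    show "bot \<notin> M"
      using fipM unfolding fip_def by (metis empty_subsetI foldr.simps(1) foldr.simps(2) id_apply
          inf_bot_left insert_subset list.set(1) list.set(2) o_apply)
    show "top \<in> M" by (rule ins) (use fipM in \<open>auto simp: fip_def\<close>)
    fix x y
    show "y \<in> M" if "x \<in> M" "x \<le> y"
    proof (rule ins, intro allI impI)
      fix xs assume "set xs \<subseteq> M"
      then have "set (x # xs) \<subseteq> M" using that by simp
      then have "foldr inf (x # xs) top \<noteq> bot" using fipM unfolding fip_def by blast
      moreover have "foldr inf (x # xs) top \<le> inf y (foldr inf xs top)"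
        using that by (simp add: le_infI1)
      ultimately show "inf y (foldr inf xs top) \<noteq> bot" by (metis bot_unique)
    qed
    show "inf x y \<in> M" if "x \<in> M" "y \<in> M"
    proof (rule ins, intro allI impI)
      fix xs assume "set xs \<subseteq> M"
      then have "set (x # y # xs) \<subseteq> M" using that by simp
      then have "foldr inf (x # y # xs) top \<noteq> bot" using fipM unfolding fip_def by blast
      then show "inf (inf x y) (foldr inf xs top) \<noteq> bot" by (simp add: inf_assoc)
    qed
    show "x \<in> M \<or> - x \<in> M"
    proof (rule ccontr)
      assume "\<not> (x \<in> M \<or> - x \<in> M)"
      then obtain xs ys where xs: "set xs \<subseteq> M" "inf x (foldr inf xs top) = bot"
        and ys: "set ys \<subseteq> M" "inf (-x) (foldr inf ys top) = bot"
        using ins by blast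
      have "foldr inf xs top \<le> - x" using xs(2) by (metis inf_shunt inf_commute)
      moreover have "foldr inf ys top \<le> x" using ys(2) by (metis inf_shunt inf_commute double_compl)
      ultimately have "foldr inf (xs @ ys) top \<le> inf (-x) x"
        unfolding foldr_inf_append by (rule inf_mono)
      then have "foldr inf (xs @ ys) top = bot" by (simp add: le_bot)
      moreover have "set (xs @ ys) \<subseteq> M" using xs ys by simp
      ultimately show False using fipM unfolding fip_def by blast
    qed
  qed
  then show ?thesis using FM by blast
qed

lemma ultrafilter_exists1:
  fixes b :: "'a::boolean_algebra"
  assumes "b \<noteq> bot"
  shows "\<exists>U\<in>St. b \<in> U"
proof -
  have "b \<le> foldr inf xs top" if "set xs \<subseteq> {b}" for xs
    using that by (induct xs) auto
  then have "fip {b}" unfolding fip_def using assms by (metis bot_unique)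
  then show ?thesis using ultrafilter_exists[of "{b}"] by (auto simp: St_def)
qed

context
  fixes U :: "'a::boolean_algebra set"
  assumes U: "ultrafilter_ba U"
begin

lemma uf_bot: "bot \<notin> U" and uf_top: "top \<in> U"
  using U by (auto simp: ultrafilter_ba_def)

lemma uf_up: "x \<in> U \<Longrightarrow> x \<le> y \<Longrightarrow> y \<in> U"
  using U by (auto simp: ultrafilter_ba_def)

lemma uf_inf: "inf x y \<in> U \<longleftrightarrow> x \<in> U \<and> y \<in> U"
  using U unfolding ultrafilter_ba_def by (meson inf_le1 inf_le2)

lemma uf_compl: "- x \<in> U \<longleftrightarrow> x \<notin> U"
  using U uf_inf[of x "-x"] uf_bot unfolding ultrafilter_ba_def by auto

lemma uf_sup: "sup x y \<in> U \<longleftrightarrow> x \<in> U \<or> y \<in> U"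
proof -
  have "- sup x y = inf (-x) (-y)" by simp
  then show ?thesis using uf_compl[of "sup x y"] uf_inf[of "-x" "-y"] uf_compl by auto
qed

lemma uf_diff: "x - y \<in> U \<longleftrightarrow> x \<in> U \<and> y \<notin> U"
  by (simp add: diff_eq uf_inf uf_compl)

end

lemma St_uf: "U \<in> St \<Longrightarrow> ultrafilter_ba U"
  by (simp add: St_def)

lemma stone_set_sub: "stone_set a \<subseteq> St"
  by (auto simp: stone_set_def)

lemma stone_set_inf: "stone_set (inf a b) = stone_set a \<inter> stone_set b"
  by (auto simp: stone_set_def St_def uf_inf)

lemma stone_set_sup: "stone_set (sup a b) = stone_set a \<union> stone_set b"
  by (auto simp: stone_set_def St_def uf_sup)

lemma stone_set_compl: "stone_set (- a) = St - stone_set a"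
  by (auto simp: stone_set_def St_def uf_compl)

lemma stone_set_diff: "stone_set (a - b) = stone_set a - stone_set b"
  by (auto simp: stone_set_def St_def uf_diff)

lemma stone_set_bot: "stone_set bot = {}"
  by (auto simp: stone_set_def St_def uf_bot)

lemma stone_set_top: "stone_set top = St"
  by (auto simp: stone_set_def St_def uf_top)

lemma stone_set_le: "stone_set a \<subseteq> stone_set b \<Longrightarrow> a \<le> b"
  for a :: "'a::boolean_algebra"
proof (rule ccontr)
  assume s: "stone_set a \<subseteq> stone_set b" and "\<not> a \<le> b"
  then have "a - b \<noteq> bot" by (simp add: diff_eq inf_shunt)
  then obtain U where "U \<in> St" "a - b \<in> U" using ultrafilter_exists1 by blast
  then show False using s by (auto simp: stone_set_def St_def uf_diff)
qed

lemma stone_set_empty: "stone_set a = {} \<Longrightarrow> a = bot"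
  using stone_set_le[of a bot] by (simp add: stone_set_bot le_bot)

lemma stone_set_foldr: "stone_set (foldr sup xs bot) = \<Union> (stone_set ` set xs)"
  by (induct xs) (simp_all add: stone_set_bot stone_set_sup)

lemma topspace_stone: "topspace (stone_top :: 'a::boolean_algebra set topology) = St"
proof -
  have "\<Union> (range (stone_set :: 'a \<Rightarrow> _)) = St"
    using stone_set_sub stone_set_top[where 'a='a] by blast
  then show ?thesis by (simp add: stone_top_def)
qed

lemma open_stone_set: "openin stone_top (stone_set a)"
  unfolding stone_top_def by (rule topology_generated_by_Basis) simp

lemma openin_stone:
  "openin (stone_top :: 'a::boolean_algebra set topology) W \<longleftrightarrow>
     W \<subseteq> St \<and> (\<forall>x\<in>W. \<exists>a::'a. x \<in> stone_set a \<and> stone_set a \<subseteq> W)"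
proof
  assume "openin stone_top W"
  then have g: "generate_topology_on (range stone_set) W"
    unfolding stone_top_def by (rule openin_topology_generated_by)
  have "W \<subseteq> St" using \<open>openin stone_top W\<close> openin_subset topspace_stone by blast
  moreover have "\<forall>x\<in>W. \<exists>a::'a. x \<in> stone_set a \<and> stone_set a \<subseteq> W"
    using g
  proof (induct rule: generate_topology_on.induct)
    case Empty then show ?case by simp
  next
    case (Int a b)
    show ?case
    proof
      fix x assume "x \<in> a \<inter> b"
      then obtain c d where "x \<in> stone_set c" "stone_set c \<subseteq> a" "x \<in> stone_set d" "stone_set d \<subseteq> b"
        using Int by blast
      then show "\<exists>e. x \<in> stone_set e \<and> stone_set e \<subseteq> a \<inter> b"
        by (intro exI[of _ "inf c d"]) (auto simp: stone_set_inf)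
    qed
  next
    case (UN K) then show ?case by blast
  next
    case (Basis s) then show ?case by blast
  qed
  ultimately show "W \<subseteq> St \<and> (\<forall>x\<in>W. \<exists>a::'a. x \<in> stone_set a \<and> stone_set a \<subseteq> W)" by blast
next
  assume A: "W \<subseteq> St \<and> (\<forall>x\<in>W. \<exists>a::'a. x \<in> stone_set a \<and> stone_set a \<subseteq> W)"
  have "W = \<Union> {stone_set a | a::'a. stone_set a \<subseteq> W}" using A by blast
  moreover have "openin stone_top (\<Union> {stone_set a | a::'a. stone_set a \<subseteq> W})"
    by (rule openin_Union) (auto intro: open_stone_set)
  ultimately show "openin stone_top W" by simp
qed

lemma closed_stone_set: "closedin stone_top (stone_set a)"
  unfolding closedin_def topspace_stone
  using open_stone_set[of "-a"] stone_set_sub[of a] by (simp add: stone_set_compl)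

lemma Hausdorff_stone: "Hausdorff_space (stone_top :: 'a::boolean_algebra set topology)"
  unfolding Hausdorff_space_def topspace_stone
proof (intro allI impI)
  fix x y :: "'a set" assume xy: "x \<in> St \<and> y \<in> St \<and> x \<noteq> y"
  then obtain a where a: "(a \<in> x \<and> a \<notin> y) \<or> (a \<in> y \<and> a \<notin> x)" by blast
  have dj: "disjnt (stone_set b) (stone_set (-b))" for b :: 'a
    by (simp add: stone_set_compl disjnt_def)
  have mem: "z \<in> stone_set b \<longleftrightarrow> b \<in> z" if "z \<in> St" for z and b :: 'a
    using that by (simp add: stone_set_def)
  have memc: "z \<in> stone_set (-b) \<longleftrightarrow> b \<notin> z" if "z \<in> St" for z and b :: 'a
    using that uf_compl[OF St_uf[OF that]] by (simp add: stone_set_def)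
  show "\<exists>U V. openin stone_top U \<and> openin stone_top V \<and> x \<in> U \<and> y \<in> V \<and> disjnt U V"
  proof (cases "a \<in> x \<and> a \<notin> y")
    case True
    then have "x \<in> stone_set a" "y \<in> stone_set (-a)" using xy mem memc by auto
    then show ?thesis using open_stone_set dj[of a] by blast
  next
    case False
    then have "a \<in> y \<and> a \<notin> x" using a by blast
    then have "x \<in> stone_set (-a)" "y \<in> stone_set a" using xy mem memc by auto
    moreover have "disjnt (stone_set (-a)) (stone_set a)" using dj[of a] disjnt_sym by blast
    ultimately show ?thesis using open_stone_set by blast
  qed
qed

lemma compact_stone: "compact_space (stone_top :: 'a::boolean_algebra set topology)"
  unfolding compact_space_def compactin_def topspace_stone
proof (intro conjI allI impI)
  show "St \<subseteq> St" by simp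
  fix \<U> :: "'a set set set"
  assume U: "(\<forall>U\<in>\<U>. openin stone_top U) \<and> St \<subseteq> \<Union> \<U>"
  define A' where "A' = {a::'a. \<exists>u\<in>\<U>. stone_set a \<subseteq> u}"
  have "\<exists>xs. set xs \<subseteq> A' \<and> foldr sup xs bot = top"
  proof (rule ccontr)
    assume nex: "\<not> ?thesis"
    have key: "\<exists>xs. set xs \<subseteq> A' \<and> foldr inf ys top = - foldr sup xs bot"
      if "set ys \<subseteq> uminus ` A'" for ys
      using that
    proof (induct ys)
      case Nil then show ?case by (intro exI[of _ "[]"]) simp
    next
      case (Cons y ys)
      then obtain xs where xs: "set xs \<subseteq> A'" "foldr inf ys top = - foldr sup xs bot" by auto
      obtain z where "z \<in> A'" "y = - z" using Cons by auto
      then show ?case using xs by (intro exI[of _ "z # xs"]) simp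
    qed
    have "fip (uminus ` A')"
      unfolding fip_def
    proof (intro allI impI)
      fix ys assume "set ys \<subseteq> uminus ` A'"
      then obtain xs where "set xs \<subseteq> A'" "foldr inf ys top = - foldr sup xs bot" using key by blast
      then show "foldr inf ys top \<noteq> bot" using nex by (metis compl_bot_eq double_compl)
    qed
    then obtain V where V: "ultrafilter_ba V" "uminus ` A' \<subseteq> V" using ultrafilter_exists by blast
    then have "V \<in> St" by (simp add: St_def)
    then obtain u where u: "u \<in> \<U>" "V \<in> u" using U by blast
    then obtain a where a: "V \<in> stone_set a" "stone_set a \<subseteq> u" using U openin_stone by metis
    then have "a \<in> A'" using u by (auto simp: A'_def)
    then have "- a \<in> V" using V by blast
    moreover have "a \<in> V" using a by (simp add: stone_set_def)
    ultimately show False using uf_compl[OF V(1)] by blast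
  qed
  then obtain xs where xs: "set xs \<subseteq> A'" "foldr sup xs bot = top" by blast
  define ch where "ch a = (SOME u. u \<in> \<U> \<and> stone_set a \<subseteq> u)" for a
  have ch: "ch a \<in> \<U> \<and> stone_set a \<subseteq> ch a" if "a \<in> A'" for a
    using that unfolding A'_def ch_def by (metis (mono_tags, lifting) mem_Collect_eq someI_ex)
  show "\<exists>\<F>. finite \<F> \<and> \<F> \<subseteq> \<U> \<and> St \<subseteq> \<Union> \<F>"
  proof (intro exI[of _ "ch ` set xs"] conjI)
    show "finite (ch ` set xs)" by simp
    show "ch ` set xs \<subseteq> \<U>" using ch xs by blast
    have "St = \<Union> (stone_set ` set xs)" using xs(2) stone_set_foldr[of xs] stone_set_top by metis
    then show "St \<subseteq> \<Union> (ch ` set xs)" using ch xs(1) by blast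
  qed
qed

lemma compact_closed_stone: "compactin stone_top C \<Longrightarrow> closedin stone_top C"
  using compactin_imp_closedin Hausdorff_stone by blast

lemma closed_compact_stone: "closedin stone_top C \<Longrightarrow> compactin stone_top C"
  using closedin_compact_space compact_stone by blast

lemma compact_stone_set: "compactin stone_top (stone_set a)"
  by (simp add: closed_compact_stone closed_stone_set)

lemma compact_in_open:
  fixes C :: "'a::boolean_algebra set set"
  assumes C: "compactin stone_top C" and W: "openin stone_top W" and CO: "C \<subseteq> W"
  shows "\<exists>a::'a. C \<subseteq> stone_set a \<and> stone_set a \<subseteq> W"
proof -
  have "C \<subseteq> \<Union> (stone_set ` {a. stone_set a \<subseteq> W})"
    using CO W openin_stone by blast
  moreover have "\<forall>U\<in>stone_set ` {a. stone_set a \<subseteq> W}. openin stone_top U"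
    using open_stone_set by blast
  ultimately obtain F where F: "finite F" "F \<subseteq> stone_set ` {a. stone_set a \<subseteq> W}" "C \<subseteq> \<Union>F"
    using C unfolding compactin_def by meson
  then obtain S where S: "S \<subseteq> {a. stone_set a \<subseteq> W}" "finite S" "F = stone_set ` S"
    by (meson finite_subset_image)
  then obtain xs where "set xs = S" using finite_list by blast
  then show ?thesis using S F stone_set_foldr[of xs]
    by (intro exI[of _ "foldr sup xs bot"]) auto
qed

lemma cont_gen:
  assumes "f ` topspace X \<subseteq> \<Union>S"
    and "\<And>V. V \<in> S \<Longrightarrow> openin X {x \<in> topspace X. f x \<in> V}"
  shows "continuous_map X (topology_generated_by S) f"
  unfolding continuous_map_def
proof (intro conjI allI impI)
  show "f \<in> topspace X \<rightarrow> topspace (topology_generated_by S)" using assms(1) by auto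
  fix U assume "openin (topology_generated_by S) U"
  then have "generate_topology_on S U" by (rule openin_topology_generated_by)
  then show "openin X {x \<in> topspace X. f x \<in> U}"
  proof (induct rule: generate_topology_on.induct)
    case Empty then show ?case by simp
  next
    case (Int a b)
    have "{x \<in> topspace X. f x \<in> a \<inter> b} = {x \<in> topspace X. f x \<in> a} \<inter> {x \<in> topspace X. f x \<in> b}"
      by auto
    then show ?case using Int by auto
  next
    case (UN K)
    have "{x \<in> topspace X. f x \<in> \<Union>K} = \<Union> ((\<lambda>k. {x \<in> topspace X. f x \<in> k}) ` K)" by auto
    then show ?case using UN by auto
  next
    case (Basis s) then show ?case using assms(2) by blast
  qed
qed

abbreviation "RP \<equiv> radon_probs (stone_top :: 'a::boolean_algebra set topology)"

lemma sets_borel_stone: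
  "sets (borel_of (stone_top :: 'a::boolean_algebra set topology))
     = sigma_sets St {U. openin (stone_top :: 'a set topology) U}"
  "space (borel_of (stone_top :: 'a::boolean_algebra set topology)) = St"
proof -
  have "{U. openin (stone_top :: 'a set topology) U} \<subseteq> Pow St"
    using openin_subset topspace_stone by blast
  then show "sets (borel_of (stone_top :: 'a::boolean_algebra set topology))
     = sigma_sets St {U. openin (stone_top :: 'a set topology) U}"
    "space (borel_of (stone_top :: 'a::boolean_algebra set topology)) = St"
    by (simp_all add: borel_of_def topspace_stone sets_measure_of space_measure_of)
qed

lemma open_borel: "openin (stone_top :: 'a::boolean_algebra set topology) U
   \<Longrightarrow> U \<in> sets (borel_of (stone_top :: 'a set topology))"
  by (simp add: sets_borel_stone)

lemma closed_borel: "closedin (stone_top :: 'a::boolean_algebra set topology) C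
   \<Longrightarrow> C \<in> sets (borel_of (stone_top :: 'a set topology))"
proof -
  assume C: "closedin (stone_top :: 'a::boolean_algebra set topology) C"
  then have "St - C \<in> sigma_sets St {U. openin (stone_top :: 'a set topology) U}"
    by (simp add: closedin_def topspace_stone)
  then have "St - (St - C) \<in> sigma_sets St {U. openin (stone_top :: 'a set topology) U}"
    by (rule sigma_sets.Compl)
  moreover have "St - (St - C) = C" using C closedin_subset topspace_stone by blast
  ultimately show ?thesis by (simp add: sets_borel_stone)
qed

lemma compact_borel: "compactin (stone_top :: 'a::boolean_algebra set topology) C
   \<Longrightarrow> C \<in> sets (borel_of (stone_top :: 'a set topology))"
  by (simp add: closed_borel compact_closed_stone)

lemma stone_set_borel: "stone_set (a::'a::boolean_algebra) \<in> sets (borel_of (stone_top :: 'a set topology))"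
  by (simp add: open_borel open_stone_set)

context
  fixes \<nu> :: "'a::boolean_algebra set measure"
  assumes nu: "\<nu> \<in> RP"
begin

lemma rp_sets: "sets \<nu> = sets (borel_of (stone_top :: 'a set topology))"
  and rp_space: "space \<nu> = St"
  and rp_prob: "prob_space \<nu>"
  using nu by (auto simp: radon_probs_def topspace_stone)

lemma rp_inner_eq: "E \<in> sets \<nu> \<Longrightarrow>
   measure \<nu> E = (SUP C \<in> {C. compactin (stone_top :: 'a set topology) C \<and> C \<subseteq> E}. measure \<nu> C)"
  using nu by (auto simp: radon_probs_def)

lemma rp_mono: "A \<subseteq> B \<Longrightarrow> B \<in> sets \<nu> \<Longrightarrow> measure \<nu> A \<le> measure \<nu> B"
  using rp_prob by (simp add: prob_space_def finite_measure.finite_measure_mono)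

lemma rp_le1: "measure \<nu> A \<le> 1"
  using rp_prob by (simp add: prob_space.prob_le_1)

lemma rp_inner:
  assumes E: "E \<in> sets \<nu>" and e: "e > 0"
  shows "\<exists>C. compactin (stone_top :: 'a set topology) C \<and> C \<subseteq> E \<and> measure \<nu> E - e < measure \<nu> C"
proof -
  let ?S = "{C. compactin (stone_top :: 'a set topology) C \<and> C \<subseteq> E}"
  have "{} \<in> ?S" by simp
  then have ne: "?S \<noteq> {}" by blast
  have bdd: "bdd_above (measure \<nu> ` ?S)" using rp_le1 by (intro bdd_aboveI[of _ 1]) auto
  have "measure \<nu> E - e < (SUP C \<in> ?S. measure \<nu> C)" using rp_inner_eq[OF E] e by simp
  then show ?thesis using less_cSUP_iff[OF ne bdd] by blast
qed

lemma rp_outer_compact: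
  assumes C: "compactin (stone_top :: 'a set topology) C" and e: "e > 0"
  shows "\<exists>a::'a. C \<subseteq> stone_set a \<and> measure \<nu> (stone_set a) < measure \<nu> C + e"
proof -
  have Cc: "closedin stone_top C" using C compact_closed_stone by blast
  have Co: "openin stone_top (St - C)" using Cc by (simp add: closedin_def topspace_stone)
  have CB: "C \<in> sets \<nu>" using compact_borel[OF C] rp_sets by simp
  have CO: "St - C \<in> sets \<nu>" using open_borel[OF Co] rp_sets by simp
  obtain D where D: "compactin stone_top D" "D \<subseteq> St - C" "measure \<nu> (St - C) - e < measure \<nu> D"
    using rp_inner[OF CO e] by blast
  have Dc: "closedin stone_top D" using D compact_closed_stone by blast
  have Do: "openin stone_top (St - D)" using Dc by (simp add: closedin_def topspace_stone)
  have "C \<subseteq> St - D" using D(2) C compactin_subset_topspace topspace_stone by blast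
  then obtain a where a: "C \<subseteq> stone_set a" "stone_set a \<subseteq> St - D"
    using compact_in_open[OF C Do] by blast
  have DB: "D \<in> sets \<nu>" using compact_borel[OF D(1)] rp_sets by simp
  have "measure \<nu> (stone_set a) \<le> measure \<nu> (St - D)"
    using rp_mono[OF a(2)] Do open_borel rp_sets by auto
  also have "\<dots> = 1 - measure \<nu> D"
    using prob_space.prob_compl[OF rp_prob DB] rp_space by simp
  also have "\<dots> < 1 - measure \<nu> (St - C) + e" using D(3) by simp
  also have "\<dots> = measure \<nu> C + e"
    using prob_space.prob_compl[OF rp_prob CB] rp_space by simp
  finally show ?thesis using a by blast
qed

end

lemma rp_compact_eq:
  assumes n1: "\<nu>1 \<in> RP" and n2: "\<nu>2 \<in> RP"
    and eq: "\<And>a::'a::boolean_algebra. measure \<nu>1 (stone_set a) = measure \<nu>2 (stone_set a)"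
    and C: "compactin (stone_top :: 'a set topology) C"
  shows "measure \<nu>1 C \<le> measure \<nu>2 C"
proof (rule field_le_epsilon)
  fix e :: real assume e: "0 < e"
  obtain a where a: "C \<subseteq> stone_set a" "measure \<nu>2 (stone_set a) < measure \<nu>2 C + e"
    using rp_outer_compact[OF n2 C e] by blast
  have "measure \<nu>1 C \<le> measure \<nu>1 (stone_set a)"
    using rp_mono[OF n1 a(1)] stone_set_borel rp_sets[OF n1] by auto
  then show "measure \<nu>1 C \<le> measure \<nu>2 C + e" using a eq[of a] by simp
qed

lemma rp_unique:
  assumes n1: "\<nu>1 \<in> RP" and n2: "\<nu>2 \<in> RP"
    and eq: "\<And>a::'a::boolean_algebra. measure \<nu>1 (stone_set a) = measure \<nu>2 (stone_set a)"
  shows "\<nu>1 = \<nu>2"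
proof (rule measure_eqI)
  show "sets \<nu>1 = sets \<nu>2" using rp_sets[OF n1] rp_sets[OF n2] by simp
  fix A assume A: "A \<in> sets \<nu>1"
  then have A2: "A \<in> sets \<nu>2" using rp_sets[OF n1] rp_sets[OF n2] by simp
  have ceq: "measure \<nu>1 C = measure \<nu>2 C" if "compactin (stone_top :: 'a set topology) C" for C
    using rp_compact_eq[OF n1 n2 eq that] rp_compact_eq[OF n2 n1 eq[symmetric] that] by simp
  have "measure \<nu>1 A = measure \<nu>2 A"
    unfolding rp_inner_eq[OF n1 A] rp_inner_eq[OF n2 A2] by (rule SUP_cong) (auto simp: ceq)
  then show "emeasure \<nu>1 A = emeasure \<nu>2 A"
    using rp_prob[OF n1] rp_prob[OF n2]
    by (simp add: prob_space_def finite_measure.emeasure_eq_measure)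
qed

lemma rp_diff:
  assumes n1: "\<nu>1 \<in> RP" and n2: "\<nu>2 \<in> RP"
    and d: "\<And>a::'a::boolean_algebra. \<bar>measure \<nu>1 (stone_set a) - measure \<nu>2 (stone_set a)\<bar> \<le> d"
    and E: "E \<in> sets \<nu>1"
  shows "\<bar>measure \<nu>1 E - measure \<nu>2 E\<bar> \<le> d"
proof (rule field_le_epsilon)
  fix e :: real assume e: "0 < e"
  have E2: "E \<in> sets \<nu>2" using E rp_sets[OF n1] rp_sets[OF n2] by simp
  obtain C1 where C1: "compactin stone_top C1" "C1 \<subseteq> E" "measure \<nu>1 E - e/4 < measure \<nu>1 C1"
    using rp_inner[OF n1 E, of "e/4"] e by auto
  obtain C2 where C2: "compactin stone_top C2" "C2 \<subseteq> E" "measure \<nu>2 E - e/4 < measure \<nu>2 C2"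
    using rp_inner[OF n2 E2, of "e/4"] e by auto
  define C where "C = C1 \<union> C2"
  have C: "compactin stone_top C" "C \<subseteq> E" using C1 C2 by (auto simp: C_def compactin_Un)
  have CB: "C \<in> sets \<nu>1" "C \<in> sets \<nu>2" using compact_borel[OF C(1)] rp_sets[OF n1] rp_sets[OF n2] by auto
  have m1: "measure \<nu>1 E - e/4 < measure \<nu>1 C"
    using C1 rp_mono[OF n1, of C1 C] CB by (auto simp: C_def)
  have m2: "measure \<nu>2 E - e/4 < measure \<nu>2 C"
    using C2 rp_mono[OF n2, of C2 C] CB by (auto simp: C_def)
  obtain a1 where a1: "C \<subseteq> stone_set a1" "measure \<nu>1 (stone_set a1) < measure \<nu>1 C + e/4"
    using rp_outer_compact[OF n1 C(1), of "e/4"] e by auto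
  obtain a2 where a2: "C \<subseteq> stone_set a2" "measure \<nu>2 (stone_set a2) < measure \<nu>2 C + e/4"
    using rp_outer_compact[OF n2 C(1), of "e/4"] e by auto
  define a where "a = inf a1 a2"
  have Ca: "C \<subseteq> stone_set a" using a1 a2 by (simp add: a_def stone_set_inf)
  have s1: "measure \<nu>1 C \<le> measure \<nu>1 (stone_set a)" "measure \<nu>1 (stone_set a) \<le> measure \<nu>1 (stone_set a1)"
    using rp_mono[OF n1 Ca] rp_mono[OF n1, of "stone_set a" "stone_set a1"] stone_set_borel rp_sets[OF n1]
    by (auto simp: a_def stone_set_inf)
  have s2: "measure \<nu>2 C \<le> measure \<nu>2 (stone_set a)" "measure \<nu>2 (stone_set a) \<le> measure \<nu>2 (stone_set a2)"
    using rp_mono[OF n2 Ca] rp_mono[OF n2, of "stone_set a" "stone_set a2"] stone_set_borel rp_sets[OF n2]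
    by (auto simp: a_def stone_set_inf)
  have E1C: "measure \<nu>1 C \<le> measure \<nu>1 E" using rp_mono[OF n1 C(2) E] .
  have E2C: "measure \<nu>2 C \<le> measure \<nu>2 E" using rp_mono[OF n2 C(2) E2] .
  show "\<bar>measure \<nu>1 E - measure \<nu>2 E\<bar> \<le> d + e"
    using d[of a] m1 m2 a1 a2 s1 s2 E1C E2C by linarith
qed

definition rho :: "('b::boolean_algebra \<Rightarrow> real) \<Rightarrow> 'b set set \<Rightarrow> real" where
  "rho \<mu> W = (SUP b \<in> {b. stone_set b \<subseteq> W}. \<mu> b)"

definition onu :: "('b::boolean_algebra \<Rightarrow> real) \<Rightarrow> 'b set set \<Rightarrow> real" where
  "onu \<mu> E = (INF W \<in> {W. openin (stone_top :: 'b set topology) W \<and> E \<subseteq> W}. rho \<mu> W)"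

context
  fixes \<mu> :: "'b::boolean_algebra \<Rightarrow> real"
  assumes M: "metric_ba \<mu>"
begin

lemma R_ne: "{b. stone_set b \<subseteq> W} \<noteq> {}"
proof -
  have "bot \<in> {b. stone_set b \<subseteq> W}" by (simp add: stone_set_bot)
  then show ?thesis by blast
qed

lemma R_bdd: "bdd_above (\<mu> ` {b. stone_set b \<subseteq> W})"
  using mu_le1[OF M] by (intro bdd_aboveI[of _ 1]) auto

lemma R_ge: "stone_set b \<subseteq> W \<Longrightarrow> \<mu> b \<le> rho \<mu> W"
  unfolding rho_def by (rule cSUP_upper) (use R_bdd in auto)

lemma R_le: "(\<And>b. stone_set b \<subseteq> W \<Longrightarrow> \<mu> b \<le> x) \<Longrightarrow> rho \<mu> W \<le> x"
  unfolding rho_def by (rule cSUP_least) (use R_ne in auto)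

lemma R_nonneg: "0 \<le> rho \<mu> W"
  using R_ge[of bot W] mu_bot[OF M] by (simp add: stone_set_bot)

lemma R_le1: "rho \<mu> W \<le> 1"
  by (rule R_le) (rule mu_le1[OF M])

lemma R_mono: "W \<subseteq> W' \<Longrightarrow> rho \<mu> W \<le> rho \<mu> W'"
  by (rule R_le) (rule R_ge, blast)

lemma R_stone: "rho \<mu> (stone_set b) = \<mu> b"
proof (rule antisym)
  show "rho \<mu> (stone_set b) \<le> \<mu> b"
    by (rule R_le) (simp add: stone_set_le mu_mono[OF M])
  show "\<mu> b \<le> rho \<mu> (stone_set b)" by (rule R_ge) simp
qed

lemma R_approx: "e > 0 \<Longrightarrow> \<exists>b. stone_set b \<subseteq> W \<and> rho \<mu> W - e < \<mu> b"
proof -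
  assume "e > 0"
  then have "rho \<mu> W - e < (SUP b \<in> {b. stone_set b \<subseteq> W}. \<mu> b)" by (simp add: rho_def)
  then show ?thesis using less_cSUP_iff[OF R_ne R_bdd] by blast
qed

lemma R_add: "stone_set b \<subseteq> G \<Longrightarrow> rho \<mu> (G - stone_set b) + \<mu> b \<le> rho \<mu> G"
proof -
  assume bG: "stone_set b \<subseteq> G"
  have "rho \<mu> (G - stone_set b) \<le> rho \<mu> G - \<mu> b"
  proof (rule R_le)
    fix c assume c: "stone_set c \<subseteq> G - stone_set b"
    then have "stone_set (inf c b) = {}" by (auto simp: stone_set_inf)
    then have "inf c b = bot" by (rule stone_set_empty)
    then have "\<mu> (sup c b) = \<mu> c + \<mu> b" by (rule mu_add[OF M])
    moreover have "\<mu> (sup c b) \<le> rho \<mu> G" using c bG by (intro R_ge) (auto simp: stone_set_sup)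
    ultimately show "\<mu> c \<le> rho \<mu> G - \<mu> b" by simp
  qed
  then show ?thesis by simp
qed

lemma R_finite_sub:
  assumes "\<And>i. i < (N::nat) \<Longrightarrow> openin (stone_top :: 'b set topology) (W i)"
    and "stone_set b \<subseteq> (\<Union>i<N. W i)"
  shows "\<mu> b \<le> (\<Sum>i<N. rho \<mu> (W i))"
  using assms
proof (induct N arbitrary: b)
  case 0
  then have "b = bot" using stone_set_empty by auto
  then show ?case using mu_bot[OF M] by simp
next
  case (Suc N)
  have op: "openin stone_top (\<Union>i<N. W i)" using Suc.prems(1) by auto
  have cl: "closedin stone_top (stone_set b - W N)"
    using Suc.prems(1)[of N] closed_stone_set by (intro closedin_diff) auto
  have sub: "stone_set b - W N \<subseteq> (\<Union>i<N. W i)" using Suc.prems(2) by (auto simp: lessThan_Suc)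
  obtain c where c: "stone_set b - W N \<subseteq> stone_set c" "stone_set c \<subseteq> (\<Union>i<N. W i)"
    using compact_in_open[OF closed_compact_stone[OF cl] op sub] by blast
  have "\<mu> (inf b c) \<le> (\<Sum>i<N. rho \<mu> (W i))"
    using c Suc.prems by (intro Suc.hyps) (auto simp: stone_set_inf)
  moreover have "\<mu> (b - c) \<le> rho \<mu> (W N)"
    using c by (intro R_ge) (auto simp: stone_set_diff)
  ultimately show ?case using mu_split[OF M, of b c] by simp
qed

lemma R_union2:
  assumes "openin (stone_top :: 'b set topology) W1" "openin (stone_top :: 'b set topology) W2"
  shows "rho \<mu> (W1 \<union> W2) \<le> rho \<mu> W1 + rho \<mu> W2"
proof (rule R_le)
  fix b assume b: "stone_set b \<subseteq> W1 \<union> W2"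
  define W where "W i = (if i = 0 then W1 else W2)" for i :: nat
  have "\<mu> b \<le> (\<Sum>i<2. rho \<mu> (W i))"
    using assms b by (intro R_finite_sub) (auto simp: W_def lessThan_def less_2_cases_iff)
  then show "\<mu> b \<le> rho \<mu> W1 + rho \<mu> W2" by (simp add: W_def numeral_2_eq_2)
qed

lemma R_countable_sub:
  assumes op: "\<And>n. openin (stone_top :: 'b set topology) (W n)"
    and sm: "summable (\<lambda>n. rho \<mu> (W n))"
  shows "rho \<mu> (\<Union>n. W n) \<le> (\<Sum>n. rho \<mu> (W n))"
proof (rule R_le)
  fix b assume b: "stone_set b \<subseteq> (\<Union>n. W n)"
  obtain F where F: "finite F" "F \<subseteq> range W" "stone_set b \<subseteq> \<Union>F"
    using compact_stone_set[of b] b op unfolding compactin_def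
    by (metis (no_types, lifting) imageE)
  then obtain I where I: "finite I" "F = W ` I" by (meson finite_subset_image)
  obtain N where N: "\<forall>i\<in>I. i < N" using I(1) finite_nat_bounded by (metis lessThan_iff subset_eq)
  have "stone_set b \<subseteq> (\<Union>i<N. W i)" using F(3) I(2) N by auto
  then have "\<mu> b \<le> (\<Sum>i<N. rho \<mu> (W i))" using op by (intro R_finite_sub) auto
  also have "\<dots> \<le> (\<Sum>n. rho \<mu> (W n))" using sm R_nonneg by (intro sum_le_suminf) auto
  finally show "\<mu> b \<le> (\<Sum>n. rho \<mu> (W n))" .
qed

end

context
  fixes \<mu> :: "'b::boolean_algebra \<Rightarrow> real"
  assumes M: "metric_ba \<mu>"
begin

abbreviation "OPN \<equiv> \<lambda>E. {W. openin (stone_top :: 'b set topology) W \<and> E \<subseteq> W}"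

lemma O_ne: "E \<subseteq> St \<Longrightarrow> OPN E \<noteq> {}"
proof -
  assume "E \<subseteq> St"
  then have "St \<in> OPN E" using openin_topspace[of "stone_top :: 'b set topology"]
    by (simp add: topspace_stone)
  then show ?thesis by blast
qed

lemma O_bdd: "bdd_below (rho \<mu> ` OPN E)"
  using R_nonneg[OF M] by (intro bdd_belowI[of _ 0]) auto

lemma O_le: "openin stone_top W \<Longrightarrow> E \<subseteq> W \<Longrightarrow> onu \<mu> E \<le> rho \<mu> W"
  unfolding onu_def by (rule cINF_lower) (use O_bdd in auto)

lemma O_ge: "E \<subseteq> St \<Longrightarrow> (\<And>W. openin stone_top W \<Longrightarrow> E \<subseteq> W \<Longrightarrow> x \<le> rho \<mu> W) \<Longrightarrow> x \<le> onu \<mu> E"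
  unfolding onu_def by (rule cINF_greatest) (use O_ne in auto)

lemma O_nonneg: "E \<subseteq> St \<Longrightarrow> 0 \<le> onu \<mu> E"
  by (rule O_ge) (auto simp: R_nonneg[OF M])

lemma O_le1: "E \<subseteq> St \<Longrightarrow> onu \<mu> E \<le> 1"
  using O_le[of St E] R_le1[OF M, of St] openin_topspace[of "stone_top :: 'b set topology"]
  by (simp add: topspace_stone)

lemma O_open: "openin stone_top W \<Longrightarrow> onu \<mu> W = rho \<mu> W"
proof (rule antisym)
  assume W: "openin stone_top W"
  then show "onu \<mu> W \<le> rho \<mu> W" by (rule O_le) simp
  have "W \<subseteq> St" using W openin_subset topspace_stone by blast
  then show "rho \<mu> W \<le> onu \<mu> W" by (rule O_ge) (rule R_mono[OF M])
qed

lemma O_mono: "E \<subseteq> F \<Longrightarrow> F \<subseteq> St \<Longrightarrow> onu \<mu> E \<le> onu \<mu> F"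
  by (rule O_ge[of F "onu \<mu> E"]) (auto intro: O_le)

lemma O_approx: "E \<subseteq> St \<Longrightarrow> e > 0 \<Longrightarrow> \<exists>W. openin stone_top W \<and> E \<subseteq> W \<and> rho \<mu> W < onu \<mu> E + e"
proof -
  assume E: "E \<subseteq> St" and e: "e > 0"
  have "(INF W \<in> OPN E. rho \<mu> W) < onu \<mu> E + e" using e by (simp add: onu_def)
  then show ?thesis using cINF_less_iff[OF O_ne[OF E] O_bdd] by blast
qed

lemma O_empty: "onu \<mu> {} = 0"
  using O_open[of "{}"] R_stone[OF M, of bot] mu_bot[OF M] by (simp add: stone_set_bot)

lemma O_union2: "A \<subseteq> St \<Longrightarrow> B \<subseteq> St \<Longrightarrow> onu \<mu> (A \<union> B) \<le> onu \<mu> A + onu \<mu> B"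
proof (rule field_le_epsilon)
  fix e :: real assume A: "A \<subseteq> St" and B: "B \<subseteq> St" and e: "0 < e"
  obtain WA where WA: "openin stone_top WA" "A \<subseteq> WA" "rho \<mu> WA < onu \<mu> A + e/2"
    using O_approx[OF A, of "e/2"] e by auto
  obtain WB where WB: "openin stone_top WB" "B \<subseteq> WB" "rho \<mu> WB < onu \<mu> B + e/2"
    using O_approx[OF B, of "e/2"] e by auto
  have "onu \<mu> (A \<union> B) \<le> rho \<mu> (WA \<union> WB)" using WA WB by (intro O_le) auto
  also have "\<dots> \<le> rho \<mu> WA + rho \<mu> WB" using WA WB by (intro R_union2[OF M])
  finally show "onu \<mu> (A \<union> B) \<le> onu \<mu> A + onu \<mu> B + e" using WA WB by simp
qed

lemma O_countable_sub:
  assumes E: "\<And>n. E n \<subseteq> St" and sm: "summable (\<lambda>n. onu \<mu> (E n))"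
  shows "onu \<mu> (\<Union>n. E n) \<le> (\<Sum>n. onu \<mu> (E n))"
proof (rule field_le_epsilon)
  fix e :: real assume e: "0 < e"
  define d where "d n = e * (1/2)^Suc n" for n
  have d: "d sums e" unfolding d_def using sums_mult[OF power_half_series, of e] by simp
  have dpos: "d n > 0" for n using e by (simp add: d_def)
  have "\<forall>n. \<exists>W. openin stone_top W \<and> E n \<subseteq> W \<and> rho \<mu> W < onu \<mu> (E n) + d n"
    using O_approx[OF E dpos] by blast
  then obtain W where W: "\<And>n. openin stone_top (W n)" "\<And>n. E n \<subseteq> W n"
      "\<And>n. rho \<mu> (W n) < onu \<mu> (E n) + d n"
    by metis
  have sm2: "summable (\<lambda>n. onu \<mu> (E n) + d n)" using sm d by (intro summable_add) (auto simp: sums_iff)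
  have smW: "summable (\<lambda>n. rho \<mu> (W n))"
    using W(3) R_nonneg[OF M] by (intro summable_comparison_test'[OF sm2, of 0]) (auto intro: less_imp_le)
  have "onu \<mu> (\<Union>n. E n) \<le> rho \<mu> (\<Union>n. W n)"
    using W by (intro O_le) auto
  also have "\<dots> \<le> (\<Sum>n. rho \<mu> (W n))" using W(1) smW by (rule R_countable_sub[OF M])
  also have "\<dots> \<le> (\<Sum>n. onu \<mu> (E n) + d n)"
    using W(3) smW sm2 by (intro suminf_le) (auto intro: less_imp_le)
  also have "\<dots> = (\<Sum>n. onu \<mu> (E n)) + e"
    using suminf_add[OF sm, of d] d by (simp add: sums_iff)
  finally show "onu \<mu> (\<Union>n. E n) \<le> (\<Sum>n. onu \<mu> (E n)) + e" .
qed

lemma O_split_open: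
  assumes W: "openin stone_top W" and X: "X \<subseteq> St"
  shows "onu \<mu> (W \<inter> X) + onu \<mu> ((St - W) \<inter> X) = onu \<mu> X"
proof (rule antisym)
  have "X = (W \<inter> X) \<union> ((St - W) \<inter> X)" using X by blast
  then show "onu \<mu> X \<le> onu \<mu> (W \<inter> X) + onu \<mu> ((St - W) \<inter> X)"
    using O_union2[of "W \<inter> X" "(St - W) \<inter> X"] X by auto
next
  show "onu \<mu> (W \<inter> X) + onu \<mu> ((St - W) \<inter> X) \<le> onu \<mu> X"
  proof (rule field_le_epsilon)
    fix e :: real assume e: "0 < e"
    obtain G where G: "openin stone_top G" "X \<subseteq> G" "rho \<mu> G < onu \<mu> X + e/2"
      using O_approx[OF X, of "e/2"] e by auto
    obtain b where b: "stone_set b \<subseteq> G \<inter> W" "rho \<mu> (G \<inter> W) - e/2 < \<mu> b"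
      using R_approx[OF M, of "e/2" "G \<inter> W"] e by auto
    have GS: "G \<subseteq> St" using G(1) openin_subset topspace_stone by blast
    have "G - stone_set b = G \<inter> stone_set (-b)" using GS by (auto simp: stone_set_compl)
    then have op2: "openin stone_top (G - stone_set b)" using G(1) open_stone_set by auto
    have "onu \<mu> (W \<inter> X) \<le> rho \<mu> (G \<inter> W)" using G W by (intro O_le) auto
    moreover have "onu \<mu> ((St - W) \<inter> X) \<le> rho \<mu> (G - stone_set b)"
      using G b op2 by (intro O_le) auto
    moreover have "rho \<mu> (G - stone_set b) + \<mu> b \<le> rho \<mu> G" using b by (intro R_add[OF M]) auto
    ultimately show "onu \<mu> (W \<inter> X) + onu \<mu> ((St - W) \<inter> X) \<le> onu \<mu> X + e"
      using G(3) b(2) by linarith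
  qed
qed

end

definition nuh :: "('b::boolean_algebra \<Rightarrow> real) \<Rightarrow> 'b set measure" where
  "nuh \<mu> = measure_of St (sigma_sets St {U. openin (stone_top :: 'b set topology) U})
             (\<lambda>E. ennreal (onu \<mu> E))"

context
  fixes \<mu> :: "'b::boolean_algebra \<Rightarrow> real"
  assumes M: "metric_ba \<mu>"
begin

abbreviation "OPS \<equiv> {U. openin (stone_top :: 'b set topology) U}"

lemma OPS_Pow: "OPS \<subseteq> Pow St"
  using openin_subset topspace_stone by blast

lemma oms: "outer_measure_space (Pow St) (\<lambda>E. ennreal (onu \<mu> E))"
  unfolding outer_measure_space_def
proof (intro conjI)
  show "positive (Pow St) (\<lambda>E. ennreal (onu \<mu> E))"
    by (simp add: positive_def O_empty[OF M])
  show "increasing (Pow St) (\<lambda>E. ennreal (onu \<mu> E))"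
    by (auto simp: increasing_def intro!: ennreal_leI O_mono[OF M])
  show "countably_subadditive (Pow St) (\<lambda>E. ennreal (onu \<mu> E))"
    unfolding countably_subadditive_def
  proof (intro allI impI)
    fix A :: "nat \<Rightarrow> 'b set set"
    assume A: "range A \<subseteq> Pow St"
    show "ennreal (onu \<mu> (\<Union>i. A i)) \<le> (\<Sum>i. ennreal (onu \<mu> (A i)))"
    proof (cases "summable (\<lambda>i. onu \<mu> (A i))")
      case True
      have "(\<Sum>i. ennreal (onu \<mu> (A i))) = ennreal (\<Sum>i. onu \<mu> (A i))"
        using A True by (intro suminf_ennreal2) (auto intro: O_nonneg[OF M])
      moreover have "onu \<mu> (\<Union>i. A i) \<le> (\<Sum>i. onu \<mu> (A i))"
        using A True by (intro O_countable_sub[OF M]) auto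
      ultimately show ?thesis by (simp add: ennreal_leI)
    next
      case False
      have nn: "\<And>i. 0 \<le> onu \<mu> (A i)" using A by (intro O_nonneg[OF M]) auto
      have "(\<Sum>i. ennreal (onu \<mu> (A i))) = top"
        using summable_suminf_not_top[of "\<lambda>i. onu \<mu> (A i)"] nn False by blast
      then show ?thesis by simp
    qed
  qed
qed

lemma open_lambda: "openin stone_top W \<Longrightarrow> W \<in> lambda_system St (Pow St) (\<lambda>E. ennreal (onu \<mu> E))"
proof -
  assume W: "openin stone_top W"
  have WS: "W \<subseteq> St" using W openin_subset topspace_stone by blast
  show ?thesis
    unfolding lambda_system_def
  proof (intro CollectI conjI ballI)
    show "W \<in> Pow St" using WS by simp
    fix x :: "'b set set" assume x: "x \<in> Pow St"
    have "onu \<mu> (W \<inter> x) + onu \<mu> ((St - W) \<inter> x) = onu \<mu> x"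
      using O_split_open[OF M W] x by simp
    then show "ennreal (onu \<mu> (W \<inter> x)) + ennreal (onu \<mu> ((St - W) \<inter> x)) = ennreal (onu \<mu> x)"
      using x O_nonneg[OF M, of "W \<inter> x"] O_nonneg[OF M, of "(St - W) \<inter> x"]
      by (metis Int_lower2 PowD ennreal_plus order_trans)
  qed
qed

lemma ms_borel: "measure_space St (sigma_sets St OPS) (\<lambda>E. ennreal (onu \<mu> E))"
proof -
  have ms: "measure_space St (lambda_system St (Pow St) (\<lambda>E. ennreal (onu \<mu> E))) (\<lambda>E. ennreal (onu \<mu> E))"
    using sigma_algebra.caratheodory_lemma[OF sigma_algebra_Pow oms] by simp
  then have sa: "sigma_algebra St (lambda_system St (Pow St) (\<lambda>E. ennreal (onu \<mu> E)))"
    by (simp add: measure_space_def)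
  have "sigma_sets St OPS \<subseteq> lambda_system St (Pow St) (\<lambda>E. ennreal (onu \<mu> E))"
    using open_lambda by (intro sigma_algebra.sigma_sets_subset[OF sa]) auto
  then show ?thesis
    using measure_down[OF ms sigma_algebra_sigma_sets[OF OPS_Pow]] by simp
qed

lemma nuh_sets: "sets (nuh \<mu>) = sets (borel_of (stone_top :: 'b set topology))"
  and nuh_space: "space (nuh \<mu>) = St"
proof -
  have "sigma_sets St OPS \<subseteq> Pow St" using sigma_sets_into_sp[OF OPS_Pow] by blast
  then show "sets (nuh \<mu>) = sets (borel_of (stone_top :: 'b set topology))"
    "space (nuh \<mu>) = St"
    by (simp_all add: nuh_def sets_measure_of space_measure_of sigma_sets_sigma_sets_eq[OF OPS_Pow]
        sets_borel_stone)
qed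

lemma nuh_emeasure: "E \<in> sets (nuh \<mu>) \<Longrightarrow> emeasure (nuh \<mu>) E = ennreal (onu \<mu> E)"
proof -
  assume E: "E \<in> sets (nuh \<mu>)"
  then have E': "E \<in> sigma_sets St OPS" using nuh_sets by (simp add: sets_borel_stone)
  show ?thesis unfolding nuh_def
    using ms_borel E' by (intro emeasure_measure_of_sigma) (auto simp: measure_space_def)
qed

lemma nuh_measure: "E \<in> sets (nuh \<mu>) \<Longrightarrow> measure (nuh \<mu>) E = onu \<mu> E"
proof -
  assume E: "E \<in> sets (nuh \<mu>)"
  then have "E \<subseteq> St" using sets.sets_into_space nuh_space by blast
  then show ?thesis using nuh_emeasure[OF E] O_nonneg[OF M] by (simp add: measure_def)
qed

lemma nuh_prob: "prob_space (nuh \<mu>)"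
proof
  have "St \<in> sets (nuh \<mu>)" using nuh_space sets.top by metis
  then show "emeasure (nuh \<mu>) (space (nuh \<mu>)) = 1"
    using nuh_emeasure O_open[OF M, of St] R_stone[OF M, of top] mu_top[OF M]
      openin_topspace[of "stone_top :: 'b set topology"]
    by (simp add: nuh_space stone_set_top topspace_stone)
qed

lemma nuh_stone: "measure (nuh \<mu>) (stone_set b) = \<mu> b"
  by (simp add: nuh_measure nuh_sets stone_set_borel O_open[OF M open_stone_set] R_stone[OF M])

lemma nuh_RP: "nuh \<mu> \<in> RP"
proof -
  have P: "prob_space (nuh \<mu>)" by (rule nuh_prob)
  have inner: "measure (nuh \<mu>) E = (SUP C \<in> {C. compactin (stone_top :: 'b set topology) C \<and> C \<subseteq> E}. measure (nuh \<mu>) C)"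
    if E: "E \<in> sets (nuh \<mu>)" for E
  proof -
    let ?S = "{C. compactin (stone_top :: 'b set topology) C \<and> C \<subseteq> E}"
    have "{} \<in> ?S" by simp
    then have ne: "?S \<noteq> {}" by blast
    have bdd: "bdd_above (measure (nuh \<mu>) ` ?S)"
      using prob_space.prob_le_1[OF P] by (intro bdd_aboveI[of _ 1]) auto
    have ES: "E \<subseteq> St" using E sets.sets_into_space nuh_space by blast
    have CE: "St - E \<in> sets (nuh \<mu>)" using E nuh_space sets.compl_sets by metis
    show ?thesis
    proof (rule antisym)
      show "(SUP C \<in> ?S. measure (nuh \<mu>) C) \<le> measure (nuh \<mu>) E"
        using ne E P by (intro cSUP_least) (auto simp: prob_space_def finite_measure.finite_measure_mono)
      show "measure (nuh \<mu>) E \<le> (SUP C \<in> ?S. measure (nuh \<mu>) C)"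
      proof (rule field_le_epsilon)
        fix e :: real assume e: "0 < e"
        obtain W where W: "openin stone_top W" "St - E \<subseteq> W" "rho \<mu> W < onu \<mu> (St - E) + e"
          using O_approx[OF M, of "St - E" e] e by auto
        have WS: "W \<subseteq> St" using W(1) openin_subset topspace_stone by blast
        have "St - (St - W) = W" using WS by blast
        then have Cc: "closedin stone_top (St - W)" using W(1) by (simp add: closedin_def topspace_stone)
        have CS: "St - W \<in> ?S" using Cc closed_compact_stone W(2) by blast
        have WB: "W \<in> sets (nuh \<mu>)" using open_borel[OF W(1)] nuh_sets by simp
        have "measure (nuh \<mu>) (St - W) = 1 - measure (nuh \<mu>) W"
          using prob_space.prob_compl[OF P WB] nuh_space by simp
        also have "\<dots> = 1 - rho \<mu> W" using nuh_measure[OF WB] O_open[OF M W(1)] by simp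
        finally have m1: "measure (nuh \<mu>) (St - W) = 1 - rho \<mu> W" .
        have "onu \<mu> (St - E) = measure (nuh \<mu>) (St - E)" using nuh_measure[OF CE] by simp
        also have "\<dots> = 1 - measure (nuh \<mu>) E"
          using prob_space.prob_compl[OF P E] nuh_space by simp
        finally have "measure (nuh \<mu>) E - e < measure (nuh \<mu>) (St - W)"
          using W(3) m1 by simp
        moreover have "measure (nuh \<mu>) (St - W) \<le> (SUP C \<in> ?S. measure (nuh \<mu>) C)"
          using CS bdd by (rule cSUP_upper)
        ultimately show "measure (nuh \<mu>) E \<le> (SUP C \<in> ?S. measure (nuh \<mu>) C) + e" by simp
      qed
    qed
  qed
  show ?thesis
    unfolding radon_probs_def using P nuh_sets nuh_space inner
    by (simp add: topspace_stone)
qed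

lemma mu_hat_props: "mu_hat \<mu> \<in> RP \<and> (\<forall>b. measure (mu_hat \<mu>) (stone_set b) = \<mu> b)"
proof -
  have "\<exists>!\<nu>. \<nu> \<in> RP \<and> (\<forall>b. measure \<nu> (stone_set b) = \<mu> b)"
  proof (rule ex1I[of _ "nuh \<mu>"])
    show "nuh \<mu> \<in> RP \<and> (\<forall>b. measure (nuh \<mu>) (stone_set b) = \<mu> b)"
      using nuh_RP nuh_stone by blast
    fix \<nu> assume "\<nu> \<in> RP \<and> (\<forall>b. measure \<nu> (stone_set b) = \<mu> b)"
    then show "\<nu> = nuh \<mu>" using nuh_RP nuh_stone by (intro rp_unique) auto
  qed
  then show ?thesis unfolding mu_hat_def by (rule theI')
qed

end

context
  fixes \<phi> :: "'a::boolean_algebra \<Rightarrow> 'b::boolean_algebra"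
  assumes H: "\<phi> \<in> homs"
begin

lemma h_inf: "\<phi> (inf x y) = inf (\<phi> x) (\<phi> y)"
  and h_sup: "\<phi> (sup x y) = sup (\<phi> x) (\<phi> y)"
  and h_compl: "\<phi> (- x) = - \<phi> x"
  and h_bot: "\<phi> bot = bot"
  and h_top: "\<phi> top = top"
  using H by (auto simp: homs_def bool_hom_def)

lemma h_mono: "x \<le> y \<Longrightarrow> \<phi> x \<le> \<phi> y"
  by (metis h_inf inf.absorb_iff1)

lemma f_hom_St: "U \<in> St \<Longrightarrow> f_hom \<phi> U \<in> St"
proof -
  assume U: "U \<in> St"
  then have u: "ultrafilter_ba U" by (simp add: St_def)
  show ?thesis
    unfolding St_def ultrafilter_ba_def f_hom_def
  proof (intro CollectI conjI allI impI)
    show "bot \<notin> \<phi> -` U" using uf_bot[OF u] by (simp add: h_bot)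
    show "top \<in> \<phi> -` U" using uf_top[OF u] by (simp add: h_top)
    fix x y
    show "y \<in> \<phi> -` U" if "x \<in> \<phi> -` U" "x \<le> y"
      using that uf_up[OF u] h_mono by auto
    show "inf x y \<in> \<phi> -` U" if "x \<in> \<phi> -` U" "y \<in> \<phi> -` U"
      using that uf_inf[OF u] by (simp add: h_inf)
    show "x \<in> \<phi> -` U \<or> - x \<in> \<phi> -` U"
      using uf_compl[OF u] by (simp add: h_compl)
  qed
qed

lemma f_hom_pre: "{U \<in> St. f_hom \<phi> U \<in> stone_set a} = stone_set (\<phi> a)"
  using f_hom_St by (auto simp: stone_set_def f_hom_def)

lemma f_hom_pre': "f_hom \<phi> -` stone_set a \<inter> St = stone_set (\<phi> a)"
  using f_hom_pre by auto

lemma f_hom_cont: "continuous_map (stone_top :: 'b set topology) (stone_top :: 'a set topology) (f_hom \<phi>)"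
proof -
  have "continuous_map (stone_top :: 'b set topology) (topology_generated_by (range (stone_set :: 'a \<Rightarrow> _))) (f_hom \<phi>)"
  proof (rule cont_gen)
    show "f_hom \<phi> ` topspace stone_top \<subseteq> \<Union> (range stone_set)"
      using f_hom_St stone_set_top[where 'a='a] by (auto simp: topspace_stone)
    fix V assume "V \<in> range (stone_set :: 'a \<Rightarrow> _)"
    then obtain a where "V = stone_set a" by blast
    then show "openin stone_top {x \<in> topspace stone_top. f_hom \<phi> x \<in> V}"
      using f_hom_pre open_stone_set by (simp add: topspace_stone)
  qed
  then show ?thesis by (simp add: stone_top_def)
qed

end

lemma cont_measurable:
  assumes "continuous_map X Y f"
  shows "f \<in> measurable (borel_of X) (borel_of Y)"
  unfolding borel_of_def
proof (rule measurable_measure_of)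
  show "{U. openin Y U} \<subseteq> Pow (topspace Y)" using openin_subset by blast
  have "space (sigma (topspace X) {U. openin X U}) = topspace X"
    using openin_subset by (intro space_measure_of) blast
  moreover have "f \<in> topspace X \<rightarrow> topspace Y" using assms by (simp add: continuous_map_def)
  ultimately show "f \<in> space (sigma (topspace X) {U. openin X U}) \<rightarrow> topspace Y"
    by simp
  fix y assume "y \<in> {U. openin Y U}"
  then have "openin X {x \<in> topspace X. f x \<in> y}"
    using assms openin_continuous_map_preimage by blast
  moreover have "f -` y \<inter> space (sigma (topspace X) {U. openin X U}) = {x \<in> topspace X. f x \<in> y}"
    using \<open>space _ = topspace X\<close> by auto
  moreover have "sets (sigma (topspace X) {U. openin X U}) = sigma_sets (topspace X) {U. openin X U}"
    using openin_subset by (intro sets_measure_of) blast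
  ultimately show "f -` y \<inter> space (sigma (topspace X) {U. openin X U}) \<in> sets (sigma (topspace X) {U. openin X U})"
    by auto
qed

context
  fixes \<mu> :: "'b::boolean_algebra \<Rightarrow> real"
  assumes M: "metric_ba \<mu>"
begin

lemma F_meas: "\<phi> \<in> homs \<Longrightarrow> f_hom \<phi> \<in> measurable (mu_hat \<mu>) (borel_of (stone_top :: 'a::boolean_algebra set topology))"
proof -
  assume H: "\<phi> \<in> homs"
  have "f_hom \<phi> \<in> measurable (borel_of (stone_top :: 'b set topology)) (borel_of (stone_top :: 'a set topology))"
    by (rule cont_measurable[OF f_hom_cont[OF H]])
  moreover have "mu_hat \<mu> \<in> RP" using mu_hat_props[OF M] by blast
  ultimately have "sets (mu_hat \<mu>) = sets (borel_of (stone_top :: 'b set topology))"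
    by (simp add: rp_sets)
  from measurable_cong_sets[OF this refl, of "borel_of (stone_top :: 'a set topology)"]
  show ?thesis using \<open>f_hom \<phi> \<in> measurable _ _\<close> by simp
qed

lemma F_stone: "\<phi> \<in> homs \<Longrightarrow> measure (F_mu \<mu> \<phi>) (stone_set (a::'a::boolean_algebra)) = \<mu> (\<phi> a)"
proof -
  assume H: "\<phi> \<in> homs"
  have R: "mu_hat \<mu> \<in> RP" and V: "\<forall>b. measure (mu_hat \<mu>) (stone_set b) = \<mu> b"
    using mu_hat_props[OF M] by auto
  show ?thesis
    unfolding F_mu_def
    using measure_distr[OF F_meas[OF H] stone_set_borel[of a]] rp_space[OF R] f_hom_pre'[OF H] V
    by simp
qed

lemma F_RP: "\<phi> \<in> homs \<Longrightarrow> F_mu \<mu> (\<phi>::'a::boolean_algebra \<Rightarrow> 'b) \<in> RP"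
proof -
  assume H: "\<phi> \<in> homs"
  have R: "mu_hat \<mu> \<in> RP" using mu_hat_props[OF M] by blast
  have P: "prob_space (mu_hat \<mu>)" by (rule rp_prob[OF R])
  have meas: "f_hom \<phi> \<in> measurable (mu_hat \<mu>) (borel_of (stone_top :: 'a set topology))"
    by (rule F_meas[OF H])
  have PF: "prob_space (F_mu \<mu> \<phi>)" unfolding F_mu_def
    by (rule prob_space.prob_space_distr[OF P meas])
  have sF: "sets (F_mu \<mu> \<phi>) = sets (borel_of (stone_top :: 'a set topology))"
    and spF: "space (F_mu \<mu> \<phi>) = St"
    by (simp_all add: F_mu_def sets_borel_stone)
  have inner: "measure (F_mu \<mu> \<phi>) E = (SUP C \<in> {C. compactin (stone_top :: 'a set topology) C \<and> C \<subseteq> E}. measure (F_mu \<mu> \<phi>) C)"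
    if E: "E \<in> sets (F_mu \<mu> \<phi>)" for E
  proof -
    let ?S = "{C. compactin (stone_top :: 'a set topology) C \<and> C \<subseteq> E}"
    have "{} \<in> ?S" by simp
    then have ne: "?S \<noteq> {}" by blast
    have bdd: "bdd_above (measure (F_mu \<mu> \<phi>) ` ?S)"
      using prob_space.prob_le_1[OF PF] by (intro bdd_aboveI[of _ 1]) auto
    show ?thesis
    proof (rule antisym)
      show "(SUP C \<in> ?S. measure (F_mu \<mu> \<phi>) C) \<le> measure (F_mu \<mu> \<phi>) E"
        using ne E PF by (intro cSUP_least) (auto simp: prob_space_def finite_measure.finite_measure_mono)
      show "measure (F_mu \<mu> \<phi>) E \<le> (SUP C \<in> ?S. measure (F_mu \<mu> \<phi>) C)"
      proof (rule field_le_epsilon)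
        fix e :: real assume e: "0 < e"
        have EB: "E \<in> sets (borel_of (stone_top :: 'a set topology))" using E sF by simp
        have pre: "f_hom \<phi> -` E \<inter> space (mu_hat \<mu>) \<in> sets (mu_hat \<mu>)"
          using meas EB by (rule measurable_sets)
        obtain D where D: "compactin stone_top D" "D \<subseteq> f_hom \<phi> -` E \<inter> space (mu_hat \<mu>)"
          "measure (mu_hat \<mu>) (f_hom \<phi> -` E \<inter> space (mu_hat \<mu>)) - e < measure (mu_hat \<mu>) D"
          using rp_inner[OF R pre e] by blast
        define C where "C = f_hom \<phi> ` D"
        have Cc: "compactin stone_top C" unfolding C_def
          by (rule image_compactin[OF D(1) f_hom_cont[OF H]])
        have CE: "C \<subseteq> E" using D(2) by (auto simp: C_def)
        have CB: "C \<in> sets (borel_of (stone_top :: 'a set topology))" by (rule compact_borel[OF Cc])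
        have "measure (mu_hat \<mu>) D \<le> measure (mu_hat \<mu>) (f_hom \<phi> -` C \<inter> space (mu_hat \<mu>))"
          using D(2) measurable_sets[OF meas CB] by (intro rp_mono[OF R]) (auto simp: C_def)
        also have "\<dots> = measure (F_mu \<mu> \<phi>) C"
          unfolding F_mu_def using measure_distr[OF meas CB] by simp
        finally have "measure (F_mu \<mu> \<phi>) E - e < measure (F_mu \<mu> \<phi>) C"
          using D(3) measure_distr[OF meas EB] by (simp add: F_mu_def)
        moreover have "measure (F_mu \<mu> \<phi>) C \<le> (SUP C \<in> ?S. measure (F_mu \<mu> \<phi>) C)"
          using Cc CE bdd by (intro cSUP_upper) auto
        ultimately show "measure (F_mu \<mu> \<phi>) E \<le> (SUP C \<in> ?S. measure (F_mu \<mu> \<phi>) C) + e"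
          by simp
      qed
    qed
  qed
  show ?thesis unfolding radon_probs_def
    using PF sF spF inner by (simp add: topspace_stone)
qed

end

lemma d_var_bdd:
  assumes "prob_space \<nu>1" "prob_space \<nu>2"
  shows "bdd_above {\<bar>measure \<nu>1 A - measure \<nu>2 A\<bar> + \<bar>measure \<nu>1 B - measure \<nu>2 B\<bar> | A B.
        A \<in> sets \<nu>1 \<and> B \<in> sets \<nu>1 \<and> A \<inter> B = {}}"
proof (rule bdd_aboveI[of _ 2])
  fix x assume "x \<in> {\<bar>measure \<nu>1 A - measure \<nu>2 A\<bar> + \<bar>measure \<nu>1 B - measure \<nu>2 B\<bar> | A B.
        A \<in> sets \<nu>1 \<and> B \<in> sets \<nu>1 \<and> A \<inter> B = {}}"
  then obtain A B where x: "x = \<bar>measure \<nu>1 A - measure \<nu>2 A\<bar> + \<bar>measure \<nu>1 B - measure \<nu>2 B\<bar>" by blast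
  have "measure \<nu>1 A \<le> 1" "measure \<nu>2 A \<le> 1" "measure \<nu>1 B \<le> 1" "measure \<nu>2 B \<le> 1"
    using assms by (simp_all add: prob_space.prob_le_1)
  moreover have "0 \<le> measure \<nu>1 A" "0 \<le> measure \<nu>2 A" "0 \<le> measure \<nu>1 B" "0 \<le> measure \<nu>2 B"
    by simp_all
  ultimately show "x \<le> 2" unfolding x by linarith
qed

lemma d_var_le:
  assumes "prob_space \<nu>1" "prob_space \<nu>2"
    and "\<And>A B. A \<in> sets \<nu>1 \<Longrightarrow> B \<in> sets \<nu>1 \<Longrightarrow> A \<inter> B = {} \<Longrightarrow>
          \<bar>measure \<nu>1 A - measure \<nu>2 A\<bar> + \<bar>measure \<nu>1 B - measure \<nu>2 B\<bar> \<le> c"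
  shows "d_var \<nu>1 \<nu>2 \<le> c"
  unfolding d_var_def
proof (rule cSup_least)
  show "{\<bar>measure \<nu>1 A - measure \<nu>2 A\<bar> + \<bar>measure \<nu>1 B - measure \<nu>2 B\<bar> | A B.
        A \<in> sets \<nu>1 \<and> B \<in> sets \<nu>1 \<and> A \<inter> B = {}} \<noteq> {}"
    using sets.empty_sets[of \<nu>1] by blast
qed (use assms(3) in auto)

lemma d_var_ge:
  assumes "prob_space \<nu>1" "prob_space \<nu>2" "A \<in> sets \<nu>1" "B \<in> sets \<nu>1" "A \<inter> B = {}"
  shows "\<bar>measure \<nu>1 A - measure \<nu>2 A\<bar> + \<bar>measure \<nu>1 B - measure \<nu>2 B\<bar> \<le> d_var \<nu>1 \<nu>2"
  unfolding d_var_def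
  by (rule cSup_upper) (use assms d_var_bdd[OF assms(1,2)] in blast)+

lemma d_var_refl: "prob_space \<nu> \<Longrightarrow> d_var \<nu> \<nu> = 0"
  using d_var_le[of \<nu> \<nu> 0] d_var_ge[of \<nu> \<nu> "{}" "{}"] by simp

lemma d_var_triangle:
  assumes P: "prob_space \<nu>0" "prob_space \<nu>1" "prob_space \<nu>2" and S: "sets \<nu>0 = sets \<nu>1"
  shows "d_var \<nu>0 \<nu>2 \<le> d_var \<nu>0 \<nu>1 + d_var \<nu>1 \<nu>2"
proof (rule d_var_le[OF P(1,3)])
  fix A B assume AB: "A \<in> sets \<nu>0" "B \<in> sets \<nu>0" "A \<inter> B = {}"
  have "\<bar>measure \<nu>0 A - measure \<nu>1 A\<bar> + \<bar>measure \<nu>0 B - measure \<nu>1 B\<bar> \<le> d_var \<nu>0 \<nu>1"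
    using AB P by (intro d_var_ge) auto
  moreover have "\<bar>measure \<nu>1 A - measure \<nu>2 A\<bar> + \<bar>measure \<nu>1 B - measure \<nu>2 B\<bar> \<le> d_var \<nu>1 \<nu>2"
    using AB P S by (intro d_var_ge) auto
  ultimately show "\<bar>measure \<nu>0 A - measure \<nu>2 A\<bar> + \<bar>measure \<nu>0 B - measure \<nu>2 B\<bar>
      \<le> d_var \<nu>0 \<nu>1 + d_var \<nu>1 \<nu>2" by linarith
qed

context
  fixes \<mu> :: "'b::boolean_algebra \<Rightarrow> real"
  assumes M: "metric_ba \<mu>"
begin

lemma d_hom_ge: "d_mu \<mu> (\<phi> a) (\<psi> a) \<le> d_hom \<mu> \<phi> \<psi>"
  unfolding d_hom_def
proof (rule cSUP_upper)
  show "bdd_above (range (\<lambda>a. d_mu \<mu> (\<phi> a) (\<psi> a)))"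
    by (rule bdd_aboveI[of _ 1]) (auto simp: d_mu_le1[OF M])
qed simp

lemma d_hom_refl: "d_hom \<mu> \<phi> \<phi> = 0"
  unfolding d_hom_def d_mu_refl[OF M] by simp

lemma d_var_F:
  assumes H: "\<phi> \<in> homs" "\<psi> \<in> homs"
  shows "d_var (F_mu \<mu> (\<phi>::'a::boolean_algebra \<Rightarrow> 'b)) (F_mu \<mu> \<psi>) \<le> 2 * d_hom \<mu> \<phi> \<psi>"
proof -
  have R: "F_mu \<mu> \<phi> \<in> RP" "F_mu \<mu> \<psi> \<in> RP" using F_RP[OF M] H by auto
  have d: "\<bar>measure (F_mu \<mu> \<phi>) (stone_set a) - measure (F_mu \<mu> \<psi>) (stone_set a)\<bar> \<le> d_hom \<mu> \<phi> \<psi>" for a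
  proof -
    have "\<bar>\<mu> (\<phi> a) - \<mu> (\<psi> a)\<bar> \<le> d_mu \<mu> (\<phi> a) (\<psi> a)" by (rule mu_dist[OF M])
    also have "\<dots> \<le> d_hom \<mu> \<phi> \<psi>" by (rule d_hom_ge)
    finally show ?thesis by (simp add: F_stone[OF M H(1)] F_stone[OF M H(2)])
  qed
  show ?thesis
  proof (rule d_var_le[OF rp_prob[OF R(1)] rp_prob[OF R(2)]])
    fix A B assume AB: "A \<in> sets (F_mu \<mu> \<phi>)" "B \<in> sets (F_mu \<mu> \<phi>)"
    show "\<bar>measure (F_mu \<mu> \<phi>) A - measure (F_mu \<mu> \<psi>) A\<bar> + \<bar>measure (F_mu \<mu> \<phi>) B - measure (F_mu \<mu> \<psi>) B\<bar>
          \<le> 2 * d_hom \<mu> \<phi> \<psi>"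
      using rp_diff[OF R d AB(1)] rp_diff[OF R d AB(2)] by simp
  qed
qed

lemma ball_in_u: "\<phi> \<in> homs \<Longrightarrow> (r::real) > 0 \<Longrightarrow> {\<psi> \<in> homs. d_hom \<mu> \<phi> \<psi> < r} \<in>
   {{\<psi> \<in> homs. d_hom \<mu> \<phi>' \<psi> < r'} | \<phi>' r'. \<phi>' \<in> homs \<and> r' > 0}"
  unfolding mem_Collect_eq by (intro exI[of _ \<phi>] exI[of _ r] conjI) simp_all

lemma ball_in_p: "\<phi> \<in> homs \<Longrightarrow> (r::real) > 0 \<Longrightarrow> {\<psi> \<in> homs. d_mu \<mu> (\<phi> a) (\<psi> a) < r} \<in>
   {{\<psi> \<in> homs. d_mu \<mu> (\<phi>' a') (\<psi> a') < r'} | \<phi>' a' r'. \<phi>' \<in> homs \<and> r' > 0}"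
  unfolding mem_Collect_eq by (intro exI[of _ \<phi>] exI[of _ a] exI[of _ r] conjI) simp_all

lemma topspace_uniform: "topspace (uniform_top \<mu> :: ('a::boolean_algebra \<Rightarrow> 'b) topology) = homs"
proof
  show "topspace (uniform_top \<mu> :: ('a::boolean_algebra \<Rightarrow> 'b) topology) \<subseteq> homs"
    unfolding uniform_top_def topology_generated_by_topspace by auto
  show "homs \<subseteq> topspace (uniform_top \<mu> :: ('a::boolean_algebra \<Rightarrow> 'b) topology)"
  proof
    fix \<phi> :: "'a \<Rightarrow> 'b" assume H: "\<phi> \<in> homs"
    have mem: "\<phi> \<in> {\<psi> \<in> homs. d_hom \<mu> \<phi> \<psi> < 1}" using H by (simp add: d_hom_refl)
    show "\<phi> \<in> topspace (uniform_top \<mu> :: ('a::boolean_algebra \<Rightarrow> 'b) topology)"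
      unfolding uniform_top_def topology_generated_by_topspace
      by (rule UnionI[OF ball_in_u[OF H zero_less_one] mem])
  qed
qed

lemma topspace_pointwise: "topspace (pointwise_top \<mu> :: ('a::boolean_algebra \<Rightarrow> 'b) topology) = homs"
proof
  show "topspace (pointwise_top \<mu> :: ('a::boolean_algebra \<Rightarrow> 'b) topology) \<subseteq> homs"
    unfolding pointwise_top_def topology_generated_by_topspace by auto
  show "homs \<subseteq> topspace (pointwise_top \<mu> :: ('a::boolean_algebra \<Rightarrow> 'b) topology)"
  proof
    fix \<phi> :: "'a \<Rightarrow> 'b" assume H: "\<phi> \<in> homs"
    have mem: "\<phi> \<in> {\<psi> \<in> homs. d_mu \<mu> (\<phi> top) (\<psi> top) < 1}" using H by (simp add: d_mu_refl[OF M])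
    show "\<phi> \<in> topspace (pointwise_top \<mu> :: ('a::boolean_algebra \<Rightarrow> 'b) topology)"
      unfolding pointwise_top_def topology_generated_by_topspace
      by (rule UnionI[OF ball_in_p[OF H zero_less_one] mem])
  qed
qed

lemma cont_uniform:
  "continuous_map (uniform_top \<mu> :: ('a::boolean_algebra \<Rightarrow> 'b) topology)
     (norm_top (stone_top :: 'a set topology)) (F_mu \<mu>)"
  unfolding norm_top_def
proof (rule cont_gen)
  show "F_mu \<mu> ` topspace (uniform_top \<mu>) \<subseteq>
    \<Union> {{\<nu> \<in> RP. d_var \<nu>0 \<nu> < r} | \<nu>0 r. \<nu>0 \<in> (RP :: 'a set measure set) \<and> r > 0}"
  proof
    fix \<nu> assume "\<nu> \<in> F_mu \<mu> ` topspace (uniform_top \<mu> :: ('a \<Rightarrow> 'b) topology)"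
    then obtain \<phi> :: "'a \<Rightarrow> 'b" where "\<phi> \<in> homs" "\<nu> = F_mu \<mu> \<phi>" using topspace_uniform by auto
    then have R: "\<nu> \<in> RP" using F_RP[OF M] by simp
    then have mem: "\<nu> \<in> {\<nu>' \<in> RP. d_var \<nu> \<nu>' < 1}" using d_var_refl[OF rp_prob[OF R]] by simp
    have "{\<nu>' \<in> RP. d_var \<nu> \<nu>' < 1} \<in> {{\<nu> \<in> RP. d_var \<nu>0 \<nu> < r} | \<nu>0 r. \<nu>0 \<in> (RP :: 'a set measure set) \<and> r > 0}"
      unfolding mem_Collect_eq by (intro exI[of _ \<nu>] exI[of _ "1::real"] conjI) (simp_all add: R)
    then show "\<nu> \<in> \<Union> {{\<nu> \<in> RP. d_var \<nu>0 \<nu> < r} | \<nu>0 r. \<nu>0 \<in> (RP :: 'a set measure set) \<and> r > 0}"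
      using mem by (rule UnionI)
  qed
next
  fix V assume "V \<in> {{\<nu> \<in> RP. d_var \<nu>0 \<nu> < r} | \<nu>0 r. \<nu>0 \<in> (RP :: 'a set measure set) \<and> r > 0}"
  then obtain \<nu>0 r where V: "V = {\<nu> \<in> RP. d_var \<nu>0 \<nu> < r}" "\<nu>0 \<in> (RP :: 'a set measure set)" "r > 0"
    by blast
  show "openin (uniform_top \<mu>) {x \<in> topspace (uniform_top \<mu>). F_mu \<mu> x \<in> V}"
  proof (subst openin_subopen, intro ballI)
    fix \<phi> :: "'a \<Rightarrow> 'b"
    assume "\<phi> \<in> {x \<in> topspace (uniform_top \<mu>). F_mu \<mu> x \<in> V}"
    then have H: "\<phi> \<in> homs" and lt: "d_var \<nu>0 (F_mu \<mu> \<phi>) < r" using topspace_uniform V by auto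
    define \<delta> where "\<delta> = r - d_var \<nu>0 (F_mu \<mu> \<phi>)"
    have \<delta>: "\<delta> > 0" using lt by (simp add: \<delta>_def)
    let ?T = "{\<psi> \<in> homs. d_hom \<mu> \<phi> \<psi> < \<delta>/2}"
    have "openin (uniform_top \<mu>) ?T"
      unfolding uniform_top_def by (rule topology_generated_by_Basis) (rule ball_in_u[OF H], use \<delta> in simp)
    moreover have "\<phi> \<in> ?T" using H \<delta> by (simp add: d_hom_refl)
    moreover have "?T \<subseteq> {x \<in> topspace (uniform_top \<mu>). F_mu \<mu> x \<in> V}"
    proof
      fix \<psi> assume "\<psi> \<in> ?T"
      then have H2: "\<psi> \<in> homs" and dh: "d_hom \<mu> \<phi> \<psi> < \<delta>/2" by auto
      have R1: "F_mu \<mu> \<phi> \<in> RP" and R2: "F_mu \<mu> \<psi> \<in> RP" using F_RP[OF M] H H2 by auto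
      have "d_var \<nu>0 (F_mu \<mu> \<psi>) \<le> d_var \<nu>0 (F_mu \<mu> \<phi>) + d_var (F_mu \<mu> \<phi>) (F_mu \<mu> \<psi>)"
        using rp_prob[OF V(2)] rp_prob[OF R1] rp_prob[OF R2] rp_sets[OF V(2)] rp_sets[OF R1]
        by (intro d_var_triangle) auto
      also have "\<dots> \<le> d_var \<nu>0 (F_mu \<mu> \<phi>) + 2 * d_hom \<mu> \<phi> \<psi>" using d_var_F[OF H H2] by simp
      also have "\<dots> < r" using dh by (simp add: \<delta>_def)
      finally show "\<psi> \<in> {x \<in> topspace (uniform_top \<mu>). F_mu \<mu> x \<in> V}"
        using H2 R2 V(1) topspace_uniform by auto
    qed
    ultimately show "\<exists>T. openin (uniform_top \<mu>) T \<and> \<phi> \<in> T \<and> T \<subseteq> {x \<in> topspace (uniform_top \<mu>). F_mu \<mu> x \<in> V}"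
      by blast
  qed
qed

end

fun sfun :: "(real \<times> 'a::boolean_algebra) list \<Rightarrow> 'a set \<Rightarrow> real" where
  "sfun [] y = 0"
| "sfun ((t,b)#ps) y = t * indicator (stone_set b) y + sfun ps y"

fun ssum :: "'a set measure \<Rightarrow> (real \<times> 'a::boolean_algebra) list \<Rightarrow> real" where
  "ssum \<nu> [] = 0"
| "ssum \<nu> ((t,b)#ps) = t * measure \<nu> (stone_set b) + ssum \<nu> ps"

fun tabs :: "(real \<times> 'a) list \<Rightarrow> real" where
  "tabs [] = 0"
| "tabs ((t,b)#ps) = \<bar>t\<bar> + tabs ps"

lemma tabs_nonneg: "0 \<le> tabs ps"
  by (induct ps) auto

lemma sfun_int:
  fixes ps :: "(real \<times> 'a::boolean_algebra) list"
  assumes R: "\<nu> \<in> RP"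
  shows "integrable \<nu> (sfun ps) \<and> (\<integral>y. sfun ps y \<partial>\<nu>) = ssum \<nu> ps"
proof (induct ps)
  case Nil
  have "sfun [] = (\<lambda>y. 0)" by (rule ext) simp
  then show ?case by simp
next
  case (Cons p ps)
  obtain t b where p: "p = (t, b)" by (cases p)
  have eq: "sfun ((t,b)#ps) = (\<lambda>y. t * indicator (stone_set b) y + sfun ps y)" by (rule ext) simp
  have B: "stone_set b \<in> sets \<nu>" using stone_set_borel rp_sets[OF R] by simp
  have fin: "emeasure \<nu> (stone_set b) < \<infinity>"
    using finite_measure.emeasure_finite[of \<nu> "stone_set b"] rp_prob[OF R] by (simp add: prob_space_def less_top)
  have I1: "integrable \<nu> (\<lambda>y. t * indicator (stone_set b) y)"
    using B fin by (intro integrable_mult_right integrable_real_indicator)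
  have sp: "stone_set b \<inter> space \<nu> = stone_set b" using rp_space[OF R] stone_set_sub by blast
  show ?case using Cons I1 unfolding p eq by (simp add: sp)
qed

lemma ssum_diff:
  assumes "\<And>t b. (t, b) \<in> set ps \<Longrightarrow> \<bar>measure \<nu>1 (stone_set b) - measure \<nu>2 (stone_set b)\<bar> \<le> \<eta>"
    and "0 \<le> \<eta>"
  shows "\<bar>ssum \<nu>1 ps - ssum \<nu>2 ps\<bar> \<le> tabs ps * \<eta>"
  using assms(1)
proof (induct ps)
  case Nil then show ?case by simp
next
  case (Cons p ps)
  obtain t b where p: "p = (t, b)" by (cases p)
  have h: "\<bar>measure \<nu>1 (stone_set b) - measure \<nu>2 (stone_set b)\<bar> \<le> \<eta>" using Cons.prems p by auto
  have IH: "\<bar>ssum \<nu>1 ps - ssum \<nu>2 ps\<bar> \<le> tabs ps * \<eta>" using Cons by auto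
  have "\<bar>t * measure \<nu>1 (stone_set b) - t * measure \<nu>2 (stone_set b)\<bar>
      = \<bar>t\<bar> * \<bar>measure \<nu>1 (stone_set b) - measure \<nu>2 (stone_set b)\<bar>"
    by (simp add: abs_mult right_diff_distrib[symmetric])
  also have "\<dots> \<le> \<bar>t\<bar> * \<eta>" using h by (intro mult_left_mono) auto
  finally have "\<bar>t * measure \<nu>1 (stone_set b) - t * measure \<nu>2 (stone_set b)\<bar> \<le> \<bar>t\<bar> * \<eta>" .
  then show ?case using IH unfolding p by (simp add: distrib_right)
qed

context
  fixes g :: "'a::boolean_algebra set \<Rightarrow> real"
  assumes G: "continuous_map (stone_top :: 'a set topology) euclideanreal g"
begin

lemma g_meas: "g \<in> borel_measurable (borel_of (stone_top :: 'a set topology))"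
proof (rule borel_measurableI)
  fix S :: "real set" assume "open S"
  then have "openin stone_top {x \<in> topspace stone_top. g x \<in> S}"
    using G openin_continuous_map_preimage open_openin by blast
  moreover have "g -` S \<inter> space (borel_of (stone_top :: 'a set topology)) = {x \<in> topspace stone_top. g x \<in> S}"
    by (auto simp: sets_borel_stone topspace_stone)
  ultimately show "g -` S \<inter> space (borel_of (stone_top :: 'a set topology)) \<in> sets (borel_of stone_top)"
    using open_borel by simp
qed

lemma g_bounded: "\<exists>B. \<forall>y\<in>St. \<bar>g y\<bar> \<le> B"
proof -
  have "compactin euclideanreal (g ` topspace (stone_top :: 'a set topology))"
    using image_compactin[OF _ G] compact_stone by (simp add: compact_space_def)
  then have "bounded (g ` St)" by (simp add: topspace_stone compact_imp_bounded)
  then show ?thesis by (simp add: bounded_real)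
qed

lemma g_int: "\<nu> \<in> RP \<Longrightarrow> integrable \<nu> g"
proof -
  assume R: "\<nu> \<in> RP"
  obtain B where B: "\<forall>y\<in>St. \<bar>g y\<bar> \<le> B" using g_bounded by blast
  have "borel_measurable \<nu> = borel_measurable (borel_of (stone_top :: 'a set topology))"
    by (rule measurable_cong_sets[OF rp_sets[OF R] refl])
  then have m: "g \<in> borel_measurable \<nu>" using g_meas by metis
  show ?thesis
    using rp_prob[OF R] B m rp_space[OF R]
    by (intro finite_measure.integrable_const_bound[where B=B]) (auto simp: prob_space_def)
qed

lemma g_approx_int:
  assumes R: "\<nu> \<in> RP" and A: "\<forall>y::'a set\<in>St. \<bar>g y - sfun ps y\<bar> \<le> \<delta>"
  shows "\<bar>(\<integral>y. g y \<partial>\<nu>) - ssum \<nu> ps\<bar> \<le> \<delta>"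
proof -
  have P: "prob_space \<nu>" by (rule rp_prob[OF R])
  have Ig: "integrable \<nu> g" by (rule g_int[OF R])
  have Is: "integrable \<nu> (sfun ps)" and eq: "(\<integral>y. sfun ps y \<partial>\<nu>) = ssum \<nu> ps"
    using sfun_int[OF R] by auto
  have "(\<integral>y. g y - sfun ps y \<partial>\<nu>) \<le> \<delta>"
    using A rp_space[OF R] Ig Is
    by (intro prob_space.integral_le_const[OF P]) (auto intro!: AE_I2 simp: abs_le_iff)
  moreover have "(\<integral>y. sfun ps y - g y \<partial>\<nu>) \<le> \<delta>"
    using A rp_space[OF R] Ig Is
    by (intro prob_space.integral_le_const[OF P]) (auto intro!: AE_I2 simp: abs_le_iff)
  ultimately show ?thesis using Ig Is eq by simp
qed

lemma g_cover: "(x :: 'a set) \<in> St \<Longrightarrow> \<delta> > 0 \<Longrightarrow> \<exists>a. x \<in> stone_set a \<and> (\<forall>y\<in>stone_set a. \<bar>g y - g x\<bar> \<le> \<delta>)"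
proof -
  assume x: "x \<in> St" and d: "\<delta> > 0"
  have "openin stone_top {y \<in> topspace stone_top. g y \<in> ball (g x) \<delta>}"
    using G openin_continuous_map_preimage open_openin open_ball by blast
  moreover have "x \<in> {y \<in> topspace stone_top. g y \<in> ball (g x) \<delta>}" using x d by (simp add: topspace_stone)
  ultimately obtain a where a: "x \<in> stone_set a" "stone_set a \<subseteq> {y \<in> topspace stone_top. g y \<in> ball (g x) \<delta>}"
    unfolding openin_stone by blast
  then show ?thesis
    by (intro exI[of _ a]) (auto simp: dist_real_def abs_minus_commute less_imp_le)
qed

lemma g_step:
  fixes L :: "'a list"
  assumes "set L \<subseteq> {a. \<exists>t. \<forall>y\<in>stone_set a. \<bar>g y - t\<bar> \<le> \<delta>}"
  shows "\<exists>ps. \<forall>y::'a set\<in>St. (y \<in> stone_set (foldr sup L bot) \<longrightarrow> \<bar>g y - sfun ps y\<bar> \<le> \<delta>) \<and>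
                     (y \<notin> stone_set (foldr sup L bot) \<longrightarrow> sfun ps y = 0)"
  using assms
proof (induct L)
  case Nil
  show ?case by (intro exI[of _ "[]"]) (simp add: stone_set_bot)
next
  case (Cons a L)
  then obtain ps where ps: "\<forall>y::'a set\<in>St. (y \<in> stone_set (foldr sup L bot) \<longrightarrow> \<bar>g y - sfun ps y\<bar> \<le> \<delta>) \<and>
                     (y \<notin> stone_set (foldr sup L bot) \<longrightarrow> sfun ps y = 0)" by auto
  obtain t0 where t0: "\<forall>y\<in>stone_set a. \<bar>g y - t0\<bar> \<le> \<delta>" using Cons.prems by auto
  let ?U = "foldr sup L bot"
  let ?ps = "(t0, a - ?U) # ps"
  have "\<forall>y::'a set\<in>St. (y \<in> stone_set (foldr sup (a # L) bot) \<longrightarrow> \<bar>g y - sfun ?ps y\<bar> \<le> \<delta>) \<and>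
                     (y \<notin> stone_set (foldr sup (a # L) bot) \<longrightarrow> sfun ?ps y = 0)"
  proof
    fix y :: "'a set" assume y: "y \<in> St"
    have sf: "sfun ?ps y = t0 * indicator (stone_set (a - ?U)) y + sfun ps y" by simp
    have ssup: "stone_set (sup a ?U) = stone_set a \<union> stone_set ?U"
      by (simp add: stone_set_sup)
    have sdiff: "stone_set (a - ?U) = stone_set a - stone_set ?U" by (rule stone_set_diff)
    show "(y \<in> stone_set (foldr sup (a # L) bot) \<longrightarrow> \<bar>g y - sfun ?ps y\<bar> \<le> \<delta>) \<and>
                     (y \<notin> stone_set (foldr sup (a # L) bot) \<longrightarrow> sfun ?ps y = 0)"
    proof (cases "y \<in> stone_set ?U")
      case True
      then have "indicator (stone_set (a - ?U)) y = (0::real)" by (simp add: sdiff)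
      moreover have "\<bar>g y - sfun ps y\<bar> \<le> \<delta>" using ps y True by blast
      ultimately show ?thesis using True by (simp add: sf ssup)
    next
      case False
      then have s0: "sfun ps y = 0" using ps y by blast
      show ?thesis
      proof (cases "y \<in> stone_set a")
        case True
        then have "indicator (stone_set (a - ?U)) y = (1::real)" using False by (simp add: sdiff)
        then show ?thesis using True s0 t0 by (simp add: sf ssup)
      next
        case False
        then have "indicator (stone_set (a - ?U)) y = (0::real)" by (simp add: sdiff)
        then show ?thesis using False \<open>y \<notin> stone_set ?U\<close> s0 by (simp add: sf ssup)
      qed
    qed
  qed
  then show ?case by blast
qed

lemma g_approx: "\<delta> > 0 \<Longrightarrow> \<exists>ps. \<forall>y::'a set\<in>St. \<bar>g y - sfun ps y\<bar> \<le> \<delta>"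
proof -
  assume d: "\<delta> > 0"
  let ?P = "{a. \<exists>t. \<forall>y\<in>stone_set a. \<bar>g y - t\<bar> \<le> \<delta>}"
  have cov: "St \<subseteq> \<Union> (stone_set ` ?P)"
  proof
    fix x :: "'a set" assume x: "x \<in> St"
    then obtain a where "x \<in> stone_set a" "\<forall>y\<in>stone_set a. \<bar>g y - g x\<bar> \<le> \<delta>" using g_cover d by blast
    then show "x \<in> \<Union> (stone_set ` ?P)" by blast
  qed
  have cpt: "compactin (stone_top :: 'a set topology) St"
    using compact_stone by (simp add: compact_space_def topspace_stone)
  have opn: "\<forall>U\<in>stone_set ` ?P. openin stone_top U" using open_stone_set by blast
  have "\<forall>\<U>. (\<forall>U\<in>\<U>. openin (stone_top :: 'a set topology) U) \<and> St \<subseteq> \<Union>\<U> \<longrightarrow>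
          (\<exists>\<F>. finite \<F> \<and> \<F> \<subseteq> \<U> \<and> St \<subseteq> \<Union>\<F>)"
    using cpt by (simp add: compactin_def)
  then have "\<exists>\<F>. finite \<F> \<and> \<F> \<subseteq> stone_set ` ?P \<and> St \<subseteq> \<Union>\<F>"
    using opn cov by blast
  then obtain F where F: "finite F" "F \<subseteq> stone_set ` ?P" "St \<subseteq> \<Union>F" by blast
  then obtain S where S: "S \<subseteq> ?P" "finite S" "F = stone_set ` S" by (meson finite_subset_image)
  then obtain L where L: "set L = S" using finite_list by blast
  obtain ps where ps: "\<forall>y::'a set\<in>St. (y \<in> stone_set (foldr sup L bot) \<longrightarrow> \<bar>g y - sfun ps y\<bar> \<le> \<delta>) \<and>
                     (y \<notin> stone_set (foldr sup L bot) \<longrightarrow> sfun ps y = 0)"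
    using g_step[of L] L S by blast
  have "St \<subseteq> stone_set (foldr sup L bot)" using F S L stone_set_foldr[of L] by auto
  then show ?thesis using ps by blast
qed

end

context
  fixes \<mu> :: "'b::boolean_algebra \<Rightarrow> real"
  assumes M: "metric_ba \<mu>"
begin

lemma nbhd_open:
  fixes \<phi> :: "'a::boolean_algebra \<Rightarrow> 'b" and ps :: "(real \<times> 'a) list"
  assumes H: "\<phi> \<in> homs" and e: "\<eta> > 0"
  shows "openin (pointwise_top \<mu>) {\<psi> \<in> homs. \<forall>(t,b)\<in>set ps. d_mu \<mu> (\<phi> b) (\<psi> b) < \<eta>}"
proof (induct ps)
  case Nil
  have "{\<psi> \<in> homs. \<forall>(t,b)\<in>set ([] :: (real \<times> 'a) list). d_mu \<mu> (\<phi> b) (\<psi> b) < \<eta>} = topspace (pointwise_top \<mu>)"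
    by (simp add: topspace_pointwise[OF M])
  then show ?case by (metis openin_topspace)
next
  case (Cons p ps)
  obtain t b where p: "p = (t, b)" by (cases p)
  have eq: "{\<psi> \<in> homs. \<forall>(t,b)\<in>set (p # ps). d_mu \<mu> (\<phi> b) (\<psi> b) < \<eta>}
      = {\<psi> \<in> homs. d_mu \<mu> (\<phi> b) (\<psi> b) < \<eta>} \<inter> {\<psi> \<in> homs. \<forall>(t,b)\<in>set ps. d_mu \<mu> (\<phi> b) (\<psi> b) < \<eta>}"
    unfolding p by auto
  have "openin (pointwise_top \<mu>) {\<psi> \<in> homs. d_mu \<mu> (\<phi> b) (\<psi> b) < \<eta>}"
    unfolding pointwise_top_def by (rule topology_generated_by_Basis) (rule ball_in_p[OF M H e])
  then show ?case unfolding eq using Cons by (rule openin_Int)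
qed

lemma cont_weak:
  "continuous_map (pointwise_top \<mu> :: ('a::boolean_algebra \<Rightarrow> 'b) topology)
     (weak_star_top (stone_top :: 'a set topology)) (F_mu \<mu>)"
  unfolding weak_star_top_def
proof (rule cont_gen)
  show "F_mu \<mu> ` topspace (pointwise_top \<mu>) \<subseteq>
    \<Union> {{\<nu> \<in> RP. \<bar>(\<integral>x. f x \<partial>\<nu>) - c\<bar> < \<epsilon>} | f c \<epsilon>.
        continuous_map (stone_top :: 'a set topology) euclideanreal f \<and> \<epsilon> > 0}"
  proof
    fix \<nu> assume "\<nu> \<in> F_mu \<mu> ` topspace (pointwise_top \<mu> :: ('a \<Rightarrow> 'b) topology)"
    then obtain \<phi> :: "'a \<Rightarrow> 'b" where "\<phi> \<in> homs" "\<nu> = F_mu \<mu> \<phi>" using topspace_pointwise[OF M] by auto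
    then have R: "\<nu> \<in> RP" using F_RP[OF M] by simp
    then have mem: "\<nu> \<in> {\<nu>' \<in> RP. \<bar>(\<integral>x. (\<lambda>_. 0::real) x \<partial>\<nu>') - 0\<bar> < 1}" by simp
    have "{\<nu>' \<in> RP. \<bar>(\<integral>x. (\<lambda>_. 0::real) x \<partial>\<nu>') - 0\<bar> < 1} \<in> {{\<nu> \<in> RP. \<bar>(\<integral>x. f x \<partial>\<nu>) - c\<bar> < \<epsilon>} | f c \<epsilon>.
        continuous_map (stone_top :: 'a set topology) euclideanreal f \<and> \<epsilon> > 0}"
      unfolding mem_Collect_eq
      by (intro exI[of _ "\<lambda>_. 0::real"] exI[of _ "0::real"] exI[of _ "1::real"] conjI) simp_all
    then show "\<nu> \<in> \<Union> {{\<nu> \<in> RP. \<bar>(\<integral>x. f x \<partial>\<nu>) - c\<bar> < \<epsilon>} | f c \<epsilon>.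
        continuous_map (stone_top :: 'a set topology) euclideanreal f \<and> \<epsilon> > 0}"
      using mem by (rule UnionI)
  qed
next
  fix V assume "V \<in> {{\<nu> \<in> RP. \<bar>(\<integral>x. f x \<partial>\<nu>) - c\<bar> < \<epsilon>} | f c \<epsilon>.
        continuous_map (stone_top :: 'a set topology) euclideanreal f \<and> \<epsilon> > 0}"
  then obtain g c \<epsilon> where V: "V = {\<nu> \<in> RP. \<bar>(\<integral>x. g x \<partial>\<nu>) - c\<bar> < \<epsilon>}"
    and G: "continuous_map (stone_top :: 'a set topology) euclideanreal g" and e: "\<epsilon> > 0"
    by blast
  show "openin (pointwise_top \<mu>) {x \<in> topspace (pointwise_top \<mu>). F_mu \<mu> x \<in> V}"
  proof (subst openin_subopen, intro ballI)
    fix \<phi> :: "'a \<Rightarrow> 'b"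
    assume "\<phi> \<in> {x \<in> topspace (pointwise_top \<mu>). F_mu \<mu> x \<in> V}"
    then have H: "\<phi> \<in> homs" and lt: "\<bar>(\<integral>x. g x \<partial>F_mu \<mu> \<phi>) - c\<bar> < \<epsilon>"
      using topspace_pointwise[OF M] V by auto
    define \<delta> where "\<delta> = (\<epsilon> - \<bar>(\<integral>x. g x \<partial>F_mu \<mu> \<phi>) - c\<bar>) / 4"
    have \<delta>: "\<delta> > 0" using lt by (simp add: \<delta>_def)
    obtain ps where ps: "\<forall>y::'a set\<in>St. \<bar>g y - sfun ps y\<bar> \<le> \<delta>" using g_approx[OF G \<delta>] by blast
    define \<eta> where "\<eta> = \<delta> / (tabs ps + 1)"
    have tp: "tabs ps + 1 > 0" using tabs_nonneg[of ps] by simp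
    have \<eta>: "\<eta> > 0" using \<delta> tp by (simp add: \<eta>_def)
    have "(tabs ps + 1) * \<eta> = \<delta>" using tp by (simp add: \<eta>_def)
    then have te: "tabs ps * \<eta> \<le> \<delta>" using \<eta> by (simp add: distrib_right)
    let ?T = "{\<psi> \<in> homs. \<forall>(t,b)\<in>set ps. d_mu \<mu> (\<phi> b) (\<psi> b) < \<eta>}"
    have "openin (pointwise_top \<mu>) ?T" by (rule nbhd_open[OF H \<eta>])
    moreover have "\<phi> \<in> ?T" using H \<eta> by (auto simp: d_mu_refl[OF M])
    moreover have "?T \<subseteq> {x \<in> topspace (pointwise_top \<mu>). F_mu \<mu> x \<in> V}"
    proof
      fix \<psi> assume "\<psi> \<in> ?T"
      then have H2: "\<psi> \<in> homs" and dm: "\<And>t b. (t, b) \<in> set ps \<Longrightarrow> d_mu \<mu> (\<phi> b) (\<psi> b) < \<eta>" by auto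
      have R1: "F_mu \<mu> \<phi> \<in> RP" and R2: "F_mu \<mu> \<psi> \<in> RP" using F_RP[OF M] H H2 by auto
      have a1: "\<bar>(\<integral>x. g x \<partial>F_mu \<mu> \<phi>) - ssum (F_mu \<mu> \<phi>) ps\<bar> \<le> \<delta>" by (rule g_approx_int[OF G R1 ps])
      have a2: "\<bar>(\<integral>x. g x \<partial>F_mu \<mu> \<psi>) - ssum (F_mu \<mu> \<psi>) ps\<bar> \<le> \<delta>" by (rule g_approx_int[OF G R2 ps])
      have "\<bar>ssum (F_mu \<mu> \<phi>) ps - ssum (F_mu \<mu> \<psi>) ps\<bar> \<le> tabs ps * \<eta>"
      proof (rule ssum_diff)
        fix t b assume tb: "(t, b) \<in> set ps"
        have "\<bar>\<mu> (\<phi> b) - \<mu> (\<psi> b)\<bar> \<le> d_mu \<mu> (\<phi> b) (\<psi> b)" by (rule mu_dist[OF M])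
        also have "\<dots> \<le> \<eta>" using dm[OF tb] by simp
        finally show "\<bar>measure (F_mu \<mu> \<phi>) (stone_set b) - measure (F_mu \<mu> \<psi>) (stone_set b)\<bar> \<le> \<eta>"
          by (simp add: F_stone[OF M H] F_stone[OF M H2])
      qed (use \<eta> in simp)
      then have a3: "\<bar>ssum (F_mu \<mu> \<phi>) ps - ssum (F_mu \<mu> \<psi>) ps\<bar> \<le> \<delta>" using te by simp
      have d4: "\<epsilon> = \<bar>(\<integral>x. g x \<partial>F_mu \<mu> \<phi>) - c\<bar> + 4 * \<delta>" unfolding \<delta>_def by (simp add: field_simps)
      have "\<bar>(\<integral>x. g x \<partial>F_mu \<mu> \<psi>) - c\<bar> < \<epsilon>"
        using a1 a2 a3 \<delta> d4 by linarith
      then show "\<psi> \<in> {x \<in> topspace (pointwise_top \<mu>). F_mu \<mu> x \<in> V}"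
        using H2 R2 V topspace_pointwise[OF M] by auto
    qed
    ultimately show "\<exists>T. openin (pointwise_top \<mu>) T \<and> \<phi> \<in> T \<and> T \<subseteq> {x \<in> topspace (pointwise_top \<mu>). F_mu \<mu> x \<in> V}"
      by blast
  qed
qed

end

theorem proposition5p1:
  fixes \<mu> :: "'b::boolean_algebra \<Rightarrow> real"
  assumes "metric_ba \<mu>"
  shows "continuous_map (uniform_top \<mu> :: ('a::boolean_algebra \<Rightarrow> 'b) topology)
           (norm_top (stone_top :: 'a set topology)) (F_mu \<mu>) \<and>
         continuous_map (pointwise_top \<mu> :: ('a::boolean_algebra \<Rightarrow> 'b) topology)
           (weak_star_top (stone_top :: 'a set topology)) (F_mu \<mu>)"
  using cont_uniform[OF assms] cont_weak[OF assms] by blast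

end
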